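(* Let $X_A, X_B, X_M$ be finite sets and let the notepads and the mailbox be purely classical: $\mathcal{A}=\mathcal{C}(X_A)$, $\mathcal{B}=\mathcal{C}(X_B)$, $\mathcal{M}=\mathcal{C}(X_M)$. Then for every $\epsilon<\tfrac12$ there is no pair of strategies $(\sigma_A,\sigma_B)\in\Sigma_A(\mathcal{A},\mathcal{M})\times\Sigma_B(\mathcal{B},\mathcal{M})$ which is a weak coin tossing protocol with bias $\epsilon$ (and consequently none which is a strong coin tossing protocol with bias $\epsilon$).
   Context: Observable algebras. For a finite set $X=\{1,\dots,n\}$, $\mathcal{C}(X)\subset\mathcal{B}(\mathbb{C}^n)$ denotes the algebra of operators diagonal in a fixed orthonormal basis $\{|x\rangle\}_{x\in X}$ (a classical system). A (finite-dimensional) observable algebra is an algebra of the form $\mathcal{B}(\mathcal{H})\otimes\mathcal{C}(X)$ with $\mathcal{H}$ finite-dimensional and $X$ finite (quantum if $X$ is a singleton, classical if $\dim\mathcal{H}=1$, hybrid otherwise), viewed as a subalgebra of $\mathcal{B}(\mathcal{H}\otimes\mathbb{C}^{|X|})$. States of a system with observable algebra $\mathcal{A}$ are density operators (positive, trace one) belonging to $\mathcal{A}$. Operations are completely positive trace-preserving linear maps between observable algebras. An observable with outcomes in a finite set $Y$ on $\mathcal{A}$ is a family $(E^{(y)})_{y\in Y}$ of positive elements of $\mathcal{A}$ summing to $\mathbb{1}$. Protocol framework. Fix an even number $N$ of rounds. Alice has a private algebra $\mathcal{A}$, Bob a private algebra $\mathcal{B}$, and both share a public "mailbox" algebra $\mathcal{M}$.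 A strategy of Alice is a tuple $\sigma_A=(\rho_A^{(0)};T_A^{(2)},T_A^{(4)},\dots,T_A^{(N)};E_A)$ where $\rho_A^{(0)}$ is a state on $\mathcal{A}\otimes\mathcal{M}$, each $T_A^{(j)}:\mathcal{A}\otimes\mathcal{M}\to\mathcal{A}\otimes\mathcal{M}$ is an operation, and $E_A=(E_A^{(0)},E_A^{(1)},E_A^{(\emptyset)})$ is an observable on $\mathcal{A}$ with outcomes $\{0,1,\emptyset\}$. A strategy of Bob is $\sigma_B=(\rho_B^{(0)};T_B^{(1)},T_B^{(3)},\dots,T_B^{(N-1)};E_B)$ with $\rho_B^{(0)}$ a state on $\mathcal{B}$, operations $T_B^{(k)}:\mathcal{M}\otimes\mathcal{B}\to\mathcal{M}\otimes\mathcal{B}$ and an observable $E_B=(E_B^{(0)},E_B^{(1)},E_B^{(\emptyset)})$ on $\mathcal{B}$. The sets of such strategies are denoted $\Sigma_A(\mathcal{A},\mathcal{M})$ and $\Sigma_B(\mathcal{B},\mathcal{M})$. Given $\sigma_A,\sigma_B$, set $\rho^{(0)}=\rho_A^{(0)}\otimes\rho_B^{(0)}$ on $\mathcal{A}\otimes\mathcal{M}\otimes\mathcal{B}$ and $\rho^{(N)}=(T_A^{(N)}\otimes\mathrm{Id}_{\mathcal{B}})(\mathrm{Id}_{\mathcal{A}}\otimes T_B^{(N-1)})\cdots(T_A^{(2)}\otimes\mathrm{Id}_{\mathcal{B}})(\mathrm{Id}_{\mathcal{A}}\otimes T_B^{(1)})\rho^{(0)}$, and for $a,b\in\{0,1,\emptyset\}$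 define $\mathbb{P}(\sigma_A,\sigma_B;a,b)=\operatorname{tr}[(E_A^{(a)}\otimes\mathbb{1}\otimes E_B^{(b)})\rho^{(N)}]$. Definitions. A pair $(\sigma_A,\sigma_B)\in\Sigma_A(\mathcal{A},\mathcal{M})\times\Sigma_B(\mathcal{B},\mathcal{M})$ is a (strong) coin tossing protocol with bias $\epsilon\in[0,1/2]$ if (i) $\mathbb{P}(\sigma_A,\sigma_B;0,0)=\mathbb{P}(\sigma_A,\sigma_B;1,1)=1/2$; (ii) for every finite-dimensional observable algebra $\mathcal{R}$, every $\sigma_A'\in\Sigma_A(\mathcal{R},\mathcal{M})$ and every $x\in\{0,1\}$, $\mathbb{P}(\sigma_A',\sigma_B;x,x)\le 1/2+\epsilon$; (iii) for every finite-dimensional observable algebra $\mathcal{R}$, every $\sigma_B'\in\Sigma_B(\mathcal{R},\mathcal{M})$ and every $x\in\{0,1\}$, $\mathbb{P}(\sigma_A,\sigma_B';x,x)\le1/2+\epsilon$. It is a weak coin tossing protocol with bias $\epsilon$ if (i) holds and, for every finite-dimensional observable algebra $\mathcal{R}$, $\mathbb{P}(\sigma_A',\sigma_B;0,0)\le1/2+\epsilon$ for all $\sigma_A'\in\Sigma_A(\mathcal{R},\mathcal{M})$ and $\mathbb{P}(\sigma_A,\sigma_B';1,1)\le1/2+\epsilon$ for all $\sigma_B'\in\Sigma_B(\mathcal{R},\mathcal{M})$. *)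

theory Defs
  imports Complex_Main
begin

text \<open>Operators are represented as matrices nat \<Rightarrow> nat \<Rightarrow> complex (entries outside the
 relevant dimension are required to be zero where it matters).  An observable algebra
 B(C^d) \<otimes> C({0..<n}) is described by the pair (d,n); it acts on C^d \<otimes> C^n with index
 r = h*n + x (h < d quantum index, x < n classical index).  Tensor products of algebras
 are described by lists of such pairs, with Kronecker index ordering (first factor most
 significant).\<close>

type_synonym cmat = "nat \<Rightarrow> nat \<Rightarrow> complex"

fun adim :: "(nat \<times> nat) list \<Rightarrow> nat" where
  "adim [] = 1"
| "adim ((d, n) # fs) = d * n * adim fs"

fun cl_agree :: "(nat \<times> nat) list \<Rightarrow> nat \<Rightarrow> nat \<Rightarrow> bool" where
  "cl_agree [] i j = True"
| "cl_agree ((d, n) # fs) i j =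
     ((i div adim fs) mod n = (j div adim fs) mod n \<and> cl_agree fs (i mod adim fs) (j mod adim fs))"

definition in_alg :: "(nat \<times> nat) list \<Rightarrow> cmat \<Rightarrow> bool" where
  "in_alg fs M \<longleftrightarrow> (\<forall>i j. (adim fs \<le> i \<or> adim fs \<le> j \<or> \<not> cl_agree fs i j) \<longrightarrow> M i j = 0)"

definition psd :: "nat \<Rightarrow> cmat \<Rightarrow> bool" where
  "psd D M \<longleftrightarrow> (\<forall>v :: nat \<Rightarrow> complex.
      Im (\<Sum>i<D. \<Sum>j<D. cnj (v i) * M i j * v j) = 0 \<and>
      0 \<le> Re (\<Sum>i<D. \<Sum>j<D. cnj (v i) * M i j * v j))"

definition mtrace :: "nat \<Rightarrow> cmat \<Rightarrow> complex" where
  "mtrace D M = (\<Sum>i<D. M i i)"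

definition eye :: "nat \<Rightarrow> cmat" where
  "eye D = (\<lambda>i j. if i = j \<and> i < D then 1 else 0)"

definition mmul :: "nat \<Rightarrow> cmat \<Rightarrow> cmat \<Rightarrow> cmat" where
  "mmul D M N = (\<lambda>i j. \<Sum>k<D. M i k * N k j)"

definition kron :: "nat \<Rightarrow> cmat \<Rightarrow> cmat \<Rightarrow> cmat" where
  "kron De X Y = (\<lambda>i j. X (i div De) (j div De) * Y (i mod De) (j mod De))"

text \<open>(Id \<otimes> T) M, where T maps operators on C^Df to operators on C^Dg (acting on the
 second tensor factor, blockwise).\<close>
definition id_tensor :: "nat \<Rightarrow> nat \<Rightarrow> (cmat \<Rightarrow> cmat) \<Rightarrow> cmat \<Rightarrow> cmat" where
  "id_tensor Df Dg T M = (\<lambda>i j.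
     T (\<lambda>r s. if r < Df \<and> s < Df then M ((i div Dg) * Df + r) ((j div Dg) * Df + s) else 0)
       (i mod Dg) (j mod Dg))"

text \<open>(T \<otimes> Id) M, where T acts on the first factor and the second factor is C^De.\<close>
definition tensor_id :: "nat \<Rightarrow> (cmat \<Rightarrow> cmat) \<Rightarrow> cmat \<Rightarrow> cmat" where
  "tensor_id De T M = (\<lambda>i j.
     T (\<lambda>u u'. M (u * De + i mod De) (u' * De + j mod De)) (i div De) (j div De))"

definition is_state :: "(nat \<times> nat) list \<Rightarrow> cmat \<Rightarrow> bool" where
  "is_state fs \<rho> \<longleftrightarrow> in_alg fs \<rho> \<and> psd (adim fs) \<rho> \<and> mtrace (adim fs) \<rho> = 1"

definition is_operation :: "(nat \<times> nat) list \<Rightarrow> (nat \<times> nat) list \<Rightarrow> (cmat \<Rightarrow> cmat) \<Rightarrow> bool" where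
  "is_operation fs gs T \<longleftrightarrow>
     (\<forall>M. in_alg fs M \<longrightarrow> in_alg gs (T M)) \<and>
     (\<forall>M N c. in_alg fs M \<longrightarrow> in_alg fs N \<longrightarrow>
        T (\<lambda>i j. M i j + c * N i j) = (\<lambda>i j. T M i j + c * T N i j)) \<and>
     (\<forall>M. in_alg fs M \<longrightarrow> mtrace (adim gs) (T M) = mtrace (adim fs) M) \<and>
     (\<forall>k M. in_alg ((k, 1) # fs) M \<longrightarrow> psd (k * adim fs) M \<longrightarrow>
        psd (k * adim gs) (id_tensor (adim fs) (adim gs) T M))"

definition obs_alg :: "nat \<times> nat \<Rightarrow> bool" where
  "obs_alg a \<longleftrightarrow> 1 \<le> fst a \<and> 1 \<le> snd a"

definition classical_alg :: "nat \<Rightarrow> nat \<times> nat" where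
  "classical_alg n = (1, n)"

datatype outcome = Out0 | Out1 | Abort

definition is_observable :: "(nat \<times> nat) list \<Rightarrow> (outcome \<Rightarrow> cmat) \<Rightarrow> bool" where
  "is_observable fs E \<longleftrightarrow> (\<forall>w. in_alg fs (E w) \<and> psd (adim fs) (E w)) \<and>
     (\<lambda>i j. E Out0 i j + E Out1 i j + E Abort i j) = eye (adim fs)"

text \<open>A strategy: initial state, operations (index j = 1..N/2: for Alice T^(2j), for Bob
 T^(2j-1)), and final observable.\<close>
record strategy =
  st_init :: cmat
  st_ops :: "nat \<Rightarrow> cmat \<Rightarrow> cmat"
  st_meas :: "outcome \<Rightarrow> cmat"

definition stratA :: "nat \<Rightarrow> nat \<times> nat \<Rightarrow> nat \<times> nat \<Rightarrow> strategy \<Rightarrow> bool" where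
  "stratA N a m \<sigma> \<longleftrightarrow> is_state [a, m] (st_init \<sigma>) \<and>
     (\<forall>j\<in>{1..N div 2}. is_operation [a, m] [a, m] (st_ops \<sigma> j)) \<and>
     is_observable [a] (st_meas \<sigma>)"

definition stratB :: "nat \<Rightarrow> nat \<times> nat \<Rightarrow> nat \<times> nat \<Rightarrow> strategy \<Rightarrow> bool" where
  "stratB N b m \<sigma> \<longleftrightarrow> is_state [b] (st_init \<sigma>) \<and>
     (\<forall>j\<in>{1..N div 2}. is_operation [m, b] [m, b] (st_ops \<sigma> j)) \<and>
     is_observable [b] (st_meas \<sigma>)"

text \<open>State on A \<otimes> M \<otimes> B after k double rounds.\<close>
fun evolve :: "nat \<times> nat \<Rightarrow> nat \<times> nat \<Rightarrow> nat \<times> nat \<Rightarrow> strategy \<Rightarrow> strategy \<Rightarrow> nat \<Rightarrow> cmat" where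
  "evolve a m b \<sigma>A \<sigma>B 0 = kron (adim [b]) (st_init \<sigma>A) (st_init \<sigma>B)"
| "evolve a m b \<sigma>A \<sigma>B (Suc k) =
     tensor_id (adim [b]) (st_ops \<sigma>A (Suc k))
       (id_tensor (adim [m, b]) (adim [m, b]) (st_ops \<sigma>B (Suc k)) (evolve a m b \<sigma>A \<sigma>B k))"

definition prob :: "nat \<Rightarrow> nat \<times> nat \<Rightarrow> nat \<times> nat \<Rightarrow> nat \<times> nat \<Rightarrow> strategy \<Rightarrow> strategy \<Rightarrow>
    outcome \<Rightarrow> outcome \<Rightarrow> real" where
  "prob N a m b \<sigma>A \<sigma>B x y = Re (mtrace (adim [a, m, b])
     (mmul (adim [a, m, b])
        (kron (adim [b]) (kron (adim [m]) (st_meas \<sigma>A x) (eye (adim [m]))) (st_meas \<sigma>B y))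
        (evolve a m b \<sigma>A \<sigma>B (N div 2))))"

definition strong_coin_tossing :: "nat \<Rightarrow> nat \<times> nat \<Rightarrow> nat \<times> nat \<Rightarrow> nat \<times> nat \<Rightarrow> real \<Rightarrow>
    strategy \<Rightarrow> strategy \<Rightarrow> bool" where
  "strong_coin_tossing N a m b \<epsilon> \<sigma>A \<sigma>B \<longleftrightarrow>
     0 \<le> \<epsilon> \<and> \<epsilon> \<le> 1/2 \<and> stratA N a m \<sigma>A \<and> stratB N b m \<sigma>B \<and>
     prob N a m b \<sigma>A \<sigma>B Out0 Out0 = 1/2 \<and> prob N a m b \<sigma>A \<sigma>B Out1 Out1 = 1/2 \<and>
     (\<forall>r \<sigma>' x. obs_alg r \<longrightarrow> stratA N r m \<sigma>' \<longrightarrow> x \<in> {Out0, Out1} \<longrightarrow>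
        prob N r m b \<sigma>' \<sigma>B x x \<le> 1/2 + \<epsilon>) \<and>
     (\<forall>r \<sigma>' x. obs_alg r \<longrightarrow> stratB N r m \<sigma>' \<longrightarrow> x \<in> {Out0, Out1} \<longrightarrow>
        prob N a m r \<sigma>A \<sigma>' x x \<le> 1/2 + \<epsilon>)"

definition weak_coin_tossing :: "nat \<Rightarrow> nat \<times> nat \<Rightarrow> nat \<times> nat \<Rightarrow> nat \<times> nat \<Rightarrow> real \<Rightarrow>
    strategy \<Rightarrow> strategy \<Rightarrow> bool" where
  "weak_coin_tossing N a m b \<epsilon> \<sigma>A \<sigma>B \<longleftrightarrow>
     0 \<le> \<epsilon> \<and> \<epsilon> \<le> 1/2 \<and> stratA N a m \<sigma>A \<and> stratB N b m \<sigma>B \<and>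
     prob N a m b \<sigma>A \<sigma>B Out0 Out0 = 1/2 \<and> prob N a m b \<sigma>A \<sigma>B Out1 Out1 = 1/2 \<and>
     (\<forall>r \<sigma>'. obs_alg r \<longrightarrow> stratA N r m \<sigma>' \<longrightarrow> prob N r m b \<sigma>' \<sigma>B Out0 Out0 \<le> 1/2 + \<epsilon>) \<and>
     (\<forall>r \<sigma>'. obs_alg r \<longrightarrow> stratB N r m \<sigma>' \<longrightarrow> prob N a m r \<sigma>A \<sigma>' Out1 Out1 \<le> 1/2 + \<epsilon>)"

end

theory Submission
  imports Defs "HOL-Library.Countable"
begin
lemma sum_reindex2:
  fixes f :: "nat \<Rightarrow> 'a::comm_monoid_add"
  shows "(\<Sum>i<k*D. f i) = (\<Sum>u<k. \<Sum>y<D. f (u*D + y))"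
proof -
  have "(\<Sum>i<k*D. f i) = (\<Sum>u<k. sum f {u*D..<u*D+D})"
    by (rule sum.nat_group[symmetric])
  also have "\<dots> = (\<Sum>u<k. \<Sum>y<D. f (u*D + y))"
  proof (rule sum.cong[OF refl])
    fix u
    have "sum f {0 + u*D..<D + u*D} = sum (\<lambda>y. f (y + u*D)) {0..<D}"
      by (rule sum.shift_bounds_nat_ivl)
    then show "sum f {u*D..<u*D+D} = (\<Sum>y<D. f (u*D + y))"
      by (simp add: add.commute lessThan_atLeast0)
  qed
  finally show ?thesis .
qed

definition claz :: "(nat \<times> nat) list \<Rightarrow> bool" where
  "claz fs \<longleftrightarrow> (\<forall>p\<in>set fs. fst p = 1)"

definition diagc :: "nat \<Rightarrow> (nat \<Rightarrow> complex) \<Rightarrow> cmat" where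
  "diagc D c = (\<lambda>i j. if i = j \<and> i < D then c i else 0)"

definition unitm :: "nat \<Rightarrow> cmat" where
  "unitm x = (\<lambda>i j. if i = x \<and> j = x then 1 else 0)"

lemma cl_agree_refl: "cl_agree fs i i"
  by (induction fs arbitrary: i) auto

lemma cl_agree_claz:
  "claz fs \<Longrightarrow> i < adim fs \<Longrightarrow> j < adim fs \<Longrightarrow> cl_agree fs i j \<Longrightarrow> i = j"
proof (induction fs arbitrary: i j)
  case Nil then show ?case by simp
next
  case (Cons p fs)
  obtain d n where p: "p = (d, n)" by fastforce
  with Cons.prems have d: "d = 1" by (simp add: claz_def)
  have cf: "claz fs" using Cons.prems by (simp add: claz_def)
  let ?A = "adim fs"
  have iA: "i < n * ?A" "j < n * ?A" using Cons.prems p d by auto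
  hence "i div ?A < n" "j div ?A < n"
    by (simp_all add: less_mult_imp_div_less mult.commute)
  moreover have "?A > 0" using iA by (cases "?A = 0") auto
  ultimately have "i div ?A = j div ?A" "i mod ?A = j mod ?A"
    using Cons.prems(4) Cons.IH[OF cf] p by auto
  then show ?case by (metis div_mult_mod_eq)
qed

lemma in_alg_claz:
  assumes "claz fs"
  shows "in_alg fs M \<longleftrightarrow> (\<forall>i j. (i \<noteq> j \<or> adim fs \<le> i) \<longrightarrow> M i j = 0)"
  unfolding in_alg_def
  using cl_agree_claz[OF assms] cl_agree_refl
  by (metis linorder_not_le)

lemma in_alg_diagc: "claz fs \<Longrightarrow> in_alg fs M \<Longrightarrow> M = diagc (adim fs) (\<lambda>i. M i i)"
  by (auto simp: in_alg_claz diagc_def fun_eq_iff)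

lemma diagc_in_alg: "claz fs \<Longrightarrow> in_alg fs (diagc (adim fs) c)"
  by (auto simp: in_alg_claz diagc_def)

lemma unitm_in_alg: "claz fs \<Longrightarrow> x < adim fs \<Longrightarrow> in_alg fs (unitm x)"
  by (auto simp: in_alg_claz unitm_def)

definition kern :: "(cmat \<Rightarrow> cmat) \<Rightarrow> nat \<Rightarrow> nat \<Rightarrow> real" where
  "kern T x y = Re (T (unitm x) y y)"

lemma sum_delta2:
  fixes X :: "'a::comm_monoid_add"
  assumes "y < (D::nat)"
  shows "(\<Sum>i<D. \<Sum>j<D. if i = y \<and> j = y then X else 0) = X"
proof -
  have "(\<Sum>j<D. if i = y \<and> j = y then X else 0) = (if i = y then X else 0)" for i
    using assms by (cases "i = y") simp_all
  then show ?thesis using assms by simp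
qed

lemma sum_delta2':
  fixes f :: "nat \<Rightarrow> nat \<Rightarrow> 'a::comm_monoid_add"
  assumes "y < (D::nat)" "\<And>i j. i < D \<Longrightarrow> j < D \<Longrightarrow> (i \<noteq> y \<or> j \<noteq> y) \<Longrightarrow> f i j = 0"
  shows "(\<Sum>i<D. \<Sum>j<D. f i j) = f y y"
proof -
  have "f i j = (if i = y \<and> j = y then f y y else 0)" if "i < D" "j < D" for i j using assms(2) that by auto
  then have "(\<Sum>i<D. \<Sum>j<D. f i j) = (\<Sum>i<D. \<Sum>j<D. if i = y \<and> j = y then f y y else 0)"
    by (intro sum.cong refl) auto
  then show ?thesis using sum_delta2[OF assms(1)] by simp
qed

lemma psd_diag_entry:
  assumes "psd D M" "y < D"
  shows "Im (M y y) = 0 \<and> 0 \<le> Re (M y y)"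
proof -
  define v :: "nat \<Rightarrow> complex" where "v = (\<lambda>i. if i = y then 1 else 0)"
  have "(\<Sum>i<D. \<Sum>j<D. cnj (v i) * M i j * v j) = M y y"
  proof -
    have "(\<Sum>i<D. \<Sum>j<D. cnj (v i) * M i j * v j) = cnj (v y) * M y y * v y"
      by (rule sum_delta2'[of y D "\<lambda>i j. cnj (v i) * M i j * v j", OF assms(2)]) (auto simp: v_def)
    then show ?thesis by (simp add: v_def)
  qed
  moreover have "Im (\<Sum>i<D. \<Sum>j<D. cnj (v i) * M i j * v j) = 0 \<and> 0 \<le> Re (\<Sum>i<D. \<Sum>j<D. cnj (v i) * M i j * v j)"
    using assms(1) unfolding psd_def by blast
  ultimately show ?thesis by simp
qed

lemma op_zero:
  assumes "is_operation fs gs T"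
  shows "T (\<lambda>i j. 0) = (\<lambda>i j. 0)"
proof -
  have z: "in_alg fs (\<lambda>i j. 0)" by (simp add: in_alg_def)
  have "T (\<lambda>i j. 0 + 1 * 0) = (\<lambda>i j. T (\<lambda>i j. 0) i j + 1 * T (\<lambda>i j. 0) i j)"
    using assms z unfolding is_operation_def by blast
  then have "\<And>i j. T (\<lambda>i j. 0) i j = T (\<lambda>i j. 0) i j + T (\<lambda>i j. 0) i j"
    by (simp add: fun_eq_iff)
  then show ?thesis by (simp add: fun_eq_iff)
qed

lemma in_alg_sum:
  assumes "\<forall>x\<in>S. in_alg fs (N x)"
  shows "in_alg fs (\<lambda>i j. \<Sum>x\<in>S. c x * N x i j)"
  using assms unfolding in_alg_def by auto

lemma op_sum:
  assumes op: "is_operation fs gs T" and "finite S" and "\<forall>x\<in>S. in_alg fs (N x)"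
  shows "T (\<lambda>i j. \<Sum>x\<in>S. c x * N x i j) = (\<lambda>i j. \<Sum>x\<in>S. c x * T (N x) i j)"
  using assms(2,3)
proof (induction S rule: finite_induct)
  case empty then show ?case using op_zero[OF op] by simp
next
  case (insert y S)
  have lin: "T (\<lambda>i j. M i j + c * N' i j) = (\<lambda>i j. T M i j + c * T N' i j)"
    if "in_alg fs M" "in_alg fs N'" for M N' c
    using op that unfolding is_operation_def by blast
  have "T (\<lambda>i j. \<Sum>x\<in>insert y S. c x * N x i j)
      = T (\<lambda>i j. (\<Sum>x\<in>S. c x * N x i j) + c y * N y i j)"
    using insert by (simp add: add.commute)
  also have "\<dots> = (\<lambda>i j. T (\<lambda>i j. \<Sum>x\<in>S. c x * N x i j) i j + c y * T (N y) i j)"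
    by (rule lin) (use insert in_alg_sum in auto)
  also have "\<dots> = (\<lambda>i j. \<Sum>x\<in>insert y S. c x * T (N x) i j)"
    using insert by (simp add: add.commute)
  finally show ?case .
qed

lemma diagc_as_sum: "diagc D c = (\<lambda>i j. \<Sum>x<D. c x * unitm x i j)"
proof (intro ext)
  fix i j
  show "diagc D c i j = (\<Sum>x<D. c x * unitm x i j)"
  proof (cases "i = j \<and> i < D")
    case True
    have "(\<Sum>x<D. c x * unitm x i j) = (\<Sum>x<D. if x = i then c x else 0)"
      using True by (intro sum.cong) (auto simp: unitm_def)
    then show ?thesis using True by (simp add: diagc_def sum.delta)
  next
    case False
    then have "c x * unitm x i j = 0" if "x < D" for x using that by (auto simp: unitm_def)
    then have "(\<Sum>x<D. c x * unitm x i j) = 0" by (intro sum.neutral) auto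
    moreover have "diagc D c i j = 0" using False unfolding diagc_def by auto
    ultimately show ?thesis by simp
  qed
qed

lemma op_unit_props:
  assumes op: "is_operation fs fs T" and cl: "claz fs" and x: "x < adim fs"
  shows "in_alg fs (T (unitm x))"
    and "\<And>y. y < adim fs \<Longrightarrow> T (unitm x) y y = complex_of_real (kern T x y)"
    and "\<And>y. y < adim fs \<Longrightarrow> 0 \<le> kern T x y"
    and "(\<Sum>y<adim fs. kern T x y) = 1"
proof -
  let ?D = "adim fs"
  have ua: "in_alg fs (unitm x)" using unitm_in_alg[OF cl x] .
  show ia: "in_alg fs (T (unitm x))" using op ua unfolding is_operation_def by blast
  have cl1: "claz ((1,1)#fs)" using cl by (simp add: claz_def)
  have ua1: "in_alg ((1,1)#fs) (unitm x)" using unitm_in_alg[OF cl1] x by simp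
  have "(\<Sum>i<?D. \<Sum>j<?D. cnj (v i) * unitm x i j * v j) = cnj (v x) * v x" for v
    using x by (subst sum_delta2'[of x]) (auto simp: unitm_def)
  then have pu: "psd (1 * ?D) (unitm x)"
    unfolding psd_def by (simp add: complex_mult_cnj del: of_real_power)
  have "psd (1 * ?D) (id_tensor ?D ?D T (unitm x))"
    using op ua1 pu unfolding is_operation_def by (metis adim.simps(2) mult_1)
  moreover have "id_tensor ?D ?D T (unitm x) i j = T (unitm x) i j" if "i < ?D" "j < ?D" for i j
  proof -
    have "(\<lambda>r s. if r < ?D \<and> s < ?D then unitm x ((i div ?D) * ?D + r) ((j div ?D) * ?D + s) else 0)
          = unitm x" using that x by (auto simp: unitm_def fun_eq_iff)
    then show ?thesis using that by (simp add: id_tensor_def)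
  qed
  ultimately have ps: "psd ?D (T (unitm x))"
  proof -
    assume p1: "psd (1 * ?D) (id_tensor ?D ?D T (unitm x))"
    assume eq: "\<And>i j. i < ?D \<Longrightarrow> j < ?D \<Longrightarrow> id_tensor ?D ?D T (unitm x) i j = T (unitm x) i j"
    have "(\<Sum>i<?D. \<Sum>j<?D. cnj (v i) * id_tensor ?D ?D T (unitm x) i j * v j)
        = (\<Sum>i<?D. \<Sum>j<?D. cnj (v i) * T (unitm x) i j * v j)" for v
      using eq by (intro sum.cong refl) auto
    then show ?thesis using p1 unfolding psd_def by simp
  qed
  show "T (unitm x) y y = complex_of_real (kern T x y)" if "y < ?D" for y
    using psd_diag_entry[OF ps that] by (simp add: kern_def complex_eq_iff)
  show "0 \<le> kern T x y" if "y < ?D" for y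
    using psd_diag_entry[OF ps that] by (simp add: kern_def)
  have "mtrace ?D (T (unitm x)) = mtrace ?D (unitm x)"
    using op ua unfolding is_operation_def by blast
  also have "\<dots> = 1" using x by (simp add: mtrace_def unitm_def)
  finally have "(\<Sum>y<?D. T (unitm x) y y) = 1" by (simp add: mtrace_def)
  then have "Re (\<Sum>y<?D. T (unitm x) y y) = 1" by simp
  then show "(\<Sum>y<?D. kern T x y) = 1" by (simp add: kern_def)
qed

lemma op_diag:
  assumes op: "is_operation fs fs T" and cl: "claz fs"
  shows "T (diagc (adim fs) c) = diagc (adim fs) (\<lambda>y. \<Sum>x<adim fs. c x * complex_of_real (kern T x y))"
proof -
  let ?D = "adim fs"
  have "T (diagc ?D c) = (\<lambda>i j. \<Sum>x<?D. c x * T (unitm x) i j)"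
    unfolding diagc_as_sum by (rule op_sum[OF op]) (auto intro: unitm_in_alg[OF cl])
  also have "\<dots> = diagc ?D (\<lambda>y. \<Sum>x<?D. c x * complex_of_real (kern T x y))"
  proof (intro ext)
    fix i j
    have "T (unitm x) i j = (if i = j \<and> i < ?D then complex_of_real (kern T x i) else 0)" if "x < ?D" for x
      using op_unit_props[OF op cl that] in_alg_claz[OF cl] by auto
    then have "(\<Sum>x<?D. c x * T (unitm x) i j) = (\<Sum>x<?D. c x * (if i = j \<and> i < ?D then complex_of_real (kern T x i) else 0))"
      by (intro sum.cong) auto
    then show "(\<Sum>x<?D. c x * T (unitm x) i j) = diagc ?D (\<lambda>y. \<Sum>x<?D. c x * complex_of_real (kern T x y)) i j"
      by (cases "i = j \<and> i < ?D") (auto simp: diagc_def)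
  qed
  finally show ?thesis .
qed

definition qf :: "nat \<Rightarrow> cmat \<Rightarrow> (nat \<Rightarrow> complex) \<Rightarrow> complex" where
  "qf D M v = (\<Sum>i<D. \<Sum>j<D. cnj (v i) * M i j * v j)"

lemma psd_qf: "psd D M \<longleftrightarrow> (\<forall>v. Im (qf D M v) = 0 \<and> 0 \<le> Re (qf D M v))"
  by (simp add: psd_def qf_def)

lemma qf_reindex:
  "qf (k*D) M v = (\<Sum>u<k. \<Sum>y<D. \<Sum>u'<k. \<Sum>y'<D.
      cnj (v (u*D+y)) * M (u*D+y) (u'*D+y') * v (u'*D+y'))"
  unfolding qf_def sum_reindex2 ..

definition kop :: "nat \<Rightarrow> (nat \<Rightarrow> nat \<Rightarrow> real) \<Rightarrow> cmat \<Rightarrow> cmat" where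
  "kop D K M = (\<lambda>i j. if i = j \<and> i < D then \<Sum>x<D. M x x * complex_of_real (K x i) else 0)"

lemma sum_if_mid:
  fixes a b :: "'a::comm_ring_1" and c :: "nat \<Rightarrow> 'a"
  assumes "y < (D::nat)"
  shows "(\<Sum>y'<D. a * (if y = y' then b else 0) * c y') = a * b * c y"
proof -
  have "(\<Sum>y'<D. a * (if y = y' then b else 0) * c y') = (\<Sum>y'<D. if y = y' then a * b * c y' else 0)"
    by (intro sum.cong refl) auto
  then show ?thesis using assms by simp
qed

lemma kop_cp:
  assumes Kpos: "\<And>x y. 0 \<le> K x y" and pM: "psd (k*D) M"
  shows "psd (k*D) (id_tensor D D (kop D K) M)"
proof (cases "D = 0")
  case True then show ?thesis by (simp add: psd_def)
next
  case False
  then have D: "D > 0" by simp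
  let ?R = "id_tensor D D (kop D K) M"
  have R: "?R (u*D+y) (u'*D+y') = (if y = y' then \<Sum>x<D. M (u*D+x) (u'*D+x) * complex_of_real (K x y) else 0)"
    if "y < D" "y' < D" for u y u' y'
    using that D by (simp add: id_tensor_def kop_def)
  define w where "w x y v = (\<lambda>i. if i mod D = x then v ((i div D)*D + y) else (0::complex))" for x y and v :: "nat \<Rightarrow> complex"
  show ?thesis unfolding psd_qf
  proof
    fix v
    have "qf (k*D) ?R v = (\<Sum>u<k. \<Sum>y<D. \<Sum>u'<k. \<Sum>y'<D.
      cnj (v (u*D+y)) * ?R (u*D+y) (u'*D+y') * v (u'*D+y'))" by (rule qf_reindex)
    also have "\<dots> = (\<Sum>u<k. \<Sum>y<D. \<Sum>u'<k.
      cnj (v (u*D+y)) * (\<Sum>x<D. M (u*D+x) (u'*D+x) * complex_of_real (K x y)) * v (u'*D+y))"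
      by (intro sum.cong refl) (simp add: R sum_if_mid)
    also have "\<dots> = (\<Sum>u<k. \<Sum>y<D. \<Sum>u'<k. \<Sum>x<D.
      complex_of_real (K x y) * (cnj (v (u*D+y)) * M (u*D+x) (u'*D+x) * v (u'*D+y)))"
      by (simp add: sum_distrib_left sum_distrib_right mult_ac)
    also have "\<dots> = (\<Sum>y<D. \<Sum>x<D. complex_of_real (K x y) * (\<Sum>u<k. \<Sum>u'<k.
      cnj (v (u*D+y)) * M (u*D+x) (u'*D+x) * v (u'*D+y)))"
    proof -
      have "(\<Sum>u<k. \<Sum>y<D. \<Sum>u'<k. \<Sum>x<D. F u y u' x) = (\<Sum>y<D. \<Sum>x<D. \<Sum>u<k. \<Sum>u'<k. F u y u' x)"
        for F :: "nat \<Rightarrow> nat \<Rightarrow> nat \<Rightarrow> nat \<Rightarrow> complex"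
      proof -
        have "(\<Sum>u<k. \<Sum>y<D. \<Sum>u'<k. \<Sum>x<D. F u y u' x) = (\<Sum>u<k. \<Sum>y<D. \<Sum>x<D. \<Sum>u'<k. F u y u' x)"
          by (rule sum.cong[OF refl], rule sum.cong[OF refl], rule sum.swap)
        also have "\<dots> = (\<Sum>y<D. \<Sum>u<k. \<Sum>x<D. \<Sum>u'<k. F u y u' x)" by (rule sum.swap)
        also have "\<dots> = (\<Sum>y<D. \<Sum>x<D. \<Sum>u<k. \<Sum>u'<k. F u y u' x)"
          by (rule sum.cong[OF refl], rule sum.swap)
        finally show ?thesis .
      qed
      then show ?thesis by (simp add: sum_distrib_left)
    qed
    also have "\<dots> = (\<Sum>y<D. \<Sum>x<D. complex_of_real (K x y) * qf (k*D) M (w x y v))"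
    proof (intro sum.cong refl arg_cong2[where f="(*)"])
      fix y x assume y: "y \<in> {..<D}" and x: "x \<in> {..<D}"
      have wv: "w x y v (u*D+y2) = (if y2 = x then v (u*D+y) else 0)" if "y2 < D" for u y2
        using that D by (simp add: w_def)
      have "qf (k*D) M (w x y v) = (\<Sum>u<k. \<Sum>y2<D. \<Sum>u'<k. \<Sum>y2'<D.
        cnj (w x y v (u*D+y2)) * M (u*D+y2) (u'*D+y2') * w x y v (u'*D+y2'))" by (rule qf_reindex)
      also have "\<dots> = (\<Sum>u<k. \<Sum>u'<k. \<Sum>y2<D. \<Sum>y2'<D.
        cnj (w x y v (u*D+y2)) * M (u*D+y2) (u'*D+y2') * w x y v (u'*D+y2'))"
        by (rule sum.cong[OF refl], rule sum.swap)
      also have "\<dots> = (\<Sum>u<k. \<Sum>u'<k. cnj (v (u*D+y)) * M (u*D+x) (u'*D+x) * v (u'*D+y))"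
      proof (rule sum.cong[OF refl], rule sum.cong[OF refl])
        fix u u'
        have "(\<Sum>y2<D. \<Sum>y2'<D. cnj (w x y v (u*D+y2)) * M (u*D+y2) (u'*D+y2') * w x y v (u'*D+y2'))
           = cnj (w x y v (u*D+x)) * M (u*D+x) (u'*D+x) * w x y v (u'*D+x)"
          by (rule sum_delta2'[of x D "\<lambda>y2 y2'. cnj (w x y v (u*D+y2)) * M (u*D+y2) (u'*D+y2') * w x y v (u'*D+y2')"])
             (use x wv in auto)
        then show "(\<Sum>y2<D. \<Sum>y2'<D. cnj (w x y v (u*D+y2)) * M (u*D+y2) (u'*D+y2') * w x y v (u'*D+y2'))
           = cnj (v (u*D+y)) * M (u*D+x) (u'*D+x) * v (u'*D+y)"
          using x wv by simp
      qed
      finally show "(\<Sum>u<k. \<Sum>u'<k. cnj (v (u*D+y)) * M (u*D+x) (u'*D+x) * v (u'*D+y)) = qf (k*D) M (w x y v)"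
        by simp
    qed
    finally have eq: "qf (k*D) ?R v = (\<Sum>y<D. \<Sum>x<D. complex_of_real (K x y) * qf (k*D) M (w x y v))" .
    have i0: "Im (qf (k*D) M (w x y v)) = 0" and r0: "0 \<le> Re (qf (k*D) M (w x y v))" for x y
      using pM unfolding psd_qf by auto
    show "Im (qf (k*D) ?R v) = 0 \<and> 0 \<le> Re (qf (k*D) ?R v)"
      unfolding eq using i0 r0 Kpos by (simp add: Im_sum Re_sum sum_nonneg)
  qed
qed

lemma kop_op:
  assumes cl: "claz fs" and Kpos: "\<And>x y. 0 \<le> K x y"
    and Ksum: "\<And>x. x < adim fs \<Longrightarrow> (\<Sum>y<adim fs. K x y) = 1"
  shows "is_operation fs fs (kop (adim fs) K)"
proof -
  let ?D = "adim fs"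
  have A: "in_alg fs (kop ?D K M)" for M
    using cl by (auto simp: in_alg_claz kop_def)
  have B: "kop ?D K (\<lambda>i j. M i j + c * N i j) = (\<lambda>i j. kop ?D K M i j + c * kop ?D K N i j)" for M N c
    by (auto simp: kop_def fun_eq_iff sum.distrib sum_distrib_left algebra_simps)
  have C: "mtrace ?D (kop ?D K M) = mtrace ?D M" for M
  proof -
    have "mtrace ?D (kop ?D K M) = (\<Sum>i<?D. \<Sum>x<?D. M x x * complex_of_real (K x i))"
      by (simp add: mtrace_def kop_def)
    also have "\<dots> = (\<Sum>x<?D. \<Sum>i<?D. M x x * complex_of_real (K x i))" by (rule sum.swap)
    also have "\<dots> = (\<Sum>x<?D. M x x * complex_of_real (\<Sum>i<?D. K x i))"
      by (simp add: sum_distrib_left)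
    also have "\<dots> = mtrace ?D M" by (simp add: Ksum mtrace_def)
    finally show ?thesis .
  qed
  have D: "psd (k * ?D) (id_tensor ?D ?D (kop ?D K) M)" if "psd (k * ?D) M" for k M
    using kop_cp[OF Kpos that] .
  show ?thesis unfolding is_operation_def using A B C D by auto
qed

lemma kern_kop:
  assumes "x < D" "y < D"
  shows "kern (kop D K) x y = K x y"
proof -
  have "(\<Sum>x'<D. unitm x x' x' * complex_of_real (K x' y)) = (\<Sum>x'<D. if x' = x then complex_of_real (K x' y) else 0)"
    by (intro sum.cong refl) (auto simp: unitm_def)
  then show ?thesis using assms by (simp add: kern_def kop_def)
qed

definition stm :: "nat \<Rightarrow> nat \<Rightarrow> nat \<Rightarrow> (nat \<Rightarrow> nat \<Rightarrow> nat \<Rightarrow> real) \<Rightarrow> cmat" where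
  "stm nA nM nB p = (\<lambda>i j. if i = j \<and> i < nA*(nM*nB)
     then complex_of_real (p (i div nB div nM) (i div nB mod nM) (i mod nB)) else 0)"

definition bstep :: "nat \<Rightarrow> nat \<Rightarrow> (nat \<Rightarrow> nat \<Rightarrow> real) \<Rightarrow> (nat \<Rightarrow> nat \<Rightarrow> nat \<Rightarrow> real) \<Rightarrow> nat \<Rightarrow> nat \<Rightarrow> nat \<Rightarrow> real" where
  "bstep nM nB K p a m' b' = (\<Sum>m<nM. \<Sum>b<nB. p a m b * K (m*nB+b) (m'*nB+b'))"

definition astep :: "nat \<Rightarrow> nat \<Rightarrow> (nat \<Rightarrow> nat \<Rightarrow> real) \<Rightarrow> (nat \<Rightarrow> nat \<Rightarrow> nat \<Rightarrow> real) \<Rightarrow> nat \<Rightarrow> nat \<Rightarrow> nat \<Rightarrow> real" where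
  "astep nA nM K q a' m' b = (\<Sum>a<nA. \<Sum>m<nM. q a m b * K (a*nM+m) (a'*nM+m'))"

lemma adim2: "adim [(1,a),(1,b)] = a*b" by simp
lemma adim3: "adim [(1,a),(1,b),(1,c)] = a*(b*c)" by simp
lemma adim1: "adim [(1,a)] = a" by simp

lemma claz_simps: "claz [(1,a)]" "claz [(1,a),(1,b)]" by (auto simp: claz_def)

lemma idx_split:
  fixes i nB nM :: nat
  shows "i div (nM*nB) = i div nB div nM" "i mod (nM*nB) = (i div nB mod nM)*nB + i mod nB"
  by (simp_all add: div_mult2_eq mod_mult2_eq mult.commute)

lemma idx_comb:
  fixes r nB nM :: nat
  assumes "r < nM*nB"
  shows "(a*(nM*nB) + r) div nB div nM = a" "(a*(nM*nB) + r) div nB mod nM = r div nB"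
    "(a*(nM*nB) + r) mod nB = r mod nB"
proof -
  have nB: "nB > 0" using assms by (cases nB) auto
  have "(a*(nM*nB) + r) div nB = a*nM + r div nB" using nB by (simp add: mult.assoc[symmetric] add.commute)
  moreover have "r div nB < nM" using assms by (simp add: less_mult_imp_div_less mult.commute)
  ultimately show "(a*(nM*nB) + r) div nB div nM = a" "(a*(nM*nB) + r) div nB mod nM = r div nB"
    by simp_all
  show "(a*(nM*nB) + r) mod nB = r mod nB" by (simp add: mult.assoc[symmetric])
qed

lemma bob_step:
  assumes op: "is_operation [(1,nM),(1,nB)] [(1,nM),(1,nB)] T"
  shows "id_tensor (nM*nB) (nM*nB) T (stm nA nM nB p) = stm nA nM nB (bstep nM nB (kern T) p)"
proof (intro ext)
  fix i j
  let ?D = "nM*nB"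
  let ?a = "i div ?D" and ?a' = "j div ?D"
  define c where "c r = (if ?a = ?a' \<and> ?a < nA then complex_of_real (p ?a (r div nB) (r mod nB)) else 0)" for r
  have blk: "(\<lambda>r s. if r < ?D \<and> s < ?D then stm nA nM nB p (?a * ?D + r) (?a' * ?D + s) else 0)
           = diagc ?D c"
  proof (intro ext)
    fix r s
    show "(if r < ?D \<and> s < ?D then stm nA nM nB p (?a * ?D + r) (?a' * ?D + s) else 0) = diagc ?D c r s"
    proof (cases "r < ?D \<and> s < ?D")
      case True
      then have rs: "r < ?D" "s < ?D" by auto
      have eq: "(?a * ?D + r = ?a' * ?D + s) \<longleftrightarrow> (?a = ?a' \<and> r = s)"
      proof
        assume h: "?a * ?D + r = ?a' * ?D + s"
        have Dp: "?D > 0" using rs by (cases "?D = 0") auto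
        have "(?a * ?D + r) div ?D = ?a" "(?a' * ?D + s) div ?D = ?a'" using rs Dp
          by (simp_all add: add.commute[of "_ * _"])
        then show "?a = ?a' \<and> r = s" using h by (metis add_left_cancel)
      qed auto
      have lt: "?a * ?D + r < nA*?D \<longleftrightarrow> ?a < nA"
      proof
        assume "?a * ?D + r < nA*?D"
        then show "?a < nA" by (metis add_lessD1 mult_less_cancel2)
      next
        assume "?a < nA"
        then have "Suc ?a \<le> nA" by simp
        from mult_le_mono1[OF this, of ?D] have "Suc ?a * ?D \<le> nA * ?D" .
        then show "?a * ?D + r < nA*?D" using rs by simp
      qed
      show ?thesis using True eq lt idx_comb[OF rs(1), of ?a]
        by (auto simp: stm_def diagc_def c_def)
    next
      case False
      then show ?thesis by (auto simp: diagc_def)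
    qed
  qed
  have "id_tensor ?D ?D T (stm nA nM nB p) i j = T (diagc ?D c) (i mod ?D) (j mod ?D)"
    unfolding id_tensor_def blk[symmetric] ..
  also have "\<dots> = diagc ?D (\<lambda>y. \<Sum>x<?D. c x * complex_of_real (kern T x y)) (i mod ?D) (j mod ?D)"
    using op_diag[OF op claz_simps(2), of c] by simp
  also have "\<dots> = stm nA nM nB (bstep nM nB (kern T) p) i j"
  proof (cases "nM*nB = 0")
    case True
    then show ?thesis by (auto simp: diagc_def stm_def)
  next
    case False
    then have pos: "?D > 0" by simp
    have "(i mod ?D = j mod ?D \<and> ?a = ?a' \<and> ?a < nA) \<longleftrightarrow> (i = j \<and> i < nA * ?D)"
    proof
      assume h: "i mod ?D = j mod ?D \<and> ?a = ?a' \<and> ?a < nA"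
      then have "i = j" by (metis div_mult_mod_eq)
      moreover have "i < nA * ?D" using h pos
        by (metis div_less_iff_less_mult mult.commute)
      ultimately show "i = j \<and> i < nA * ?D" by simp
    next
      assume "i = j \<and> i < nA * ?D"
      then show "i mod ?D = j mod ?D \<and> ?a = ?a' \<and> ?a < nA"
        by (simp add: less_mult_imp_div_less)
    qed
    moreover have "(\<Sum>x<?D. complex_of_real (p ?a (x div nB) (x mod nB)) * complex_of_real (kern T x (i mod ?D)))
        = complex_of_real (bstep nM nB (kern T) p (i div nB div nM) (i div nB mod nM) (i mod nB))"
    proof -
      have nB: "nB > 0" using pos by simp
      have "(\<Sum>x<nM*nB. complex_of_real (p ?a (x div nB) (x mod nB)) * complex_of_real (kern T x (i mod ?D)))
        = (\<Sum>m<nM. \<Sum>b<nB. complex_of_real (p ?a ((m*nB+b) div nB) ((m*nB+b) mod nB)) * complex_of_real (kern T (m*nB+b) (i mod ?D)))"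
        by (rule sum_reindex2)
      also have "\<dots> = (\<Sum>m<nM. \<Sum>b<nB. complex_of_real (p ?a m b * kern T (m*nB+b) (i mod ?D)))"
        using nB by (intro sum.cong refl) simp
      finally show ?thesis
        by (simp add: bstep_def idx_split)
    qed
    ultimately show ?thesis
      using pos by (auto simp: diagc_def stm_def c_def mult.commute)
  qed
  finally show "id_tensor ?D ?D T (stm nA nM nB p) i j = stm nA nM nB (bstep nM nB (kern T) p) i j" .
qed

lemma alice_step:
  assumes op: "is_operation [(1,nA),(1,nM)] [(1,nA),(1,nM)] T"
  shows "tensor_id nB T (stm nA nM nB q) = stm nA nM nB (astep nA nM (kern T) q)"
proof (intro ext)
  fix i j
  let ?E = "nA*nM"
  let ?b = "i mod nB" and ?b' = "j mod nB"
  define c where "c u = (if ?b = ?b' then complex_of_real (q (u div nM) (u mod nM) ?b) else 0)" for u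
  show "tensor_id nB T (stm nA nM nB q) i j = stm nA nM nB (astep nA nM (kern T) q) i j"
  proof (cases "nB = 0")
    case True
    then show ?thesis using op_zero[OF op]
      by (simp add: tensor_id_def stm_def)
  next
    case False
    then have nB: "nB > 0" by simp
    have blk: "(\<lambda>u u'. stm nA nM nB q (u * nB + ?b) (u' * nB + ?b')) = diagc ?E c"
    proof (intro ext)
      fix u u'
      have bl: "?b < nB" "?b' < nB" using nB by auto
      have eq: "(u * nB + ?b = u' * nB + ?b') \<longleftrightarrow> (u = u' \<and> ?b = ?b')"
      proof
        assume h: "u * nB + ?b = u' * nB + ?b'"
        have "(u * nB + ?b) div nB = u" "(u' * nB + ?b') div nB = u'" using bl nB
          by (simp_all add: add.commute[of "_ * _"])
        then show "u = u' \<and> ?b = ?b'" using h by (metis add_left_cancel)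
      qed auto
      have lt: "u * nB + ?b < nA*(nM*nB) \<longleftrightarrow> u < ?E"
      proof
        assume "u * nB + ?b < nA*(nM*nB)"
        then show "u < ?E" by (metis add_lessD1 mult_less_cancel2 mult.assoc)
      next
        assume "u < ?E"
        then have "Suc u \<le> ?E" by simp
        from mult_le_mono1[OF this, of nB] have "Suc u * nB \<le> ?E * nB" .
        then have "nB + u * nB \<le> nA*(nM*nB)" by (simp add: mult.assoc)
        moreover have "u * nB + ?b < u*nB + nB" using bl by simp
        ultimately show "u * nB + ?b < nA*(nM*nB)" by linarith
      qed
      have dv: "(u * nB + ?b) div nB = u" "(u * nB + ?b) mod nB = ?b" using bl nB
        by (simp_all add: add.commute[of "_ * _"])
      show "stm nA nM nB q (u * nB + ?b) (u' * nB + ?b') = diagc ?E c u u'"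
        using eq lt dv by (auto simp: stm_def diagc_def c_def)
    qed
    have "tensor_id nB T (stm nA nM nB q) i j = T (diagc ?E c) (i div nB) (j div nB)"
      unfolding tensor_id_def blk ..
    also have "\<dots> = diagc ?E (\<lambda>y. \<Sum>x<?E. c x * complex_of_real (kern T x y)) (i div nB) (j div nB)"
      using op_diag[OF op claz_simps(2), of c] by simp
    also have "\<dots> = stm nA nM nB (astep nA nM (kern T) q) i j"
    proof -
      have "(i div nB = j div nB \<and> i div nB < ?E \<and> ?b = ?b') \<longleftrightarrow> (i = j \<and> i < nA * (nM*nB))"
      proof
        assume h: "i div nB = j div nB \<and> i div nB < ?E \<and> ?b = ?b'"
        then have "i = j" by (metis div_mult_mod_eq)
        moreover have "i < nA * (nM*nB)" using h nB
          by (metis div_less_iff_less_mult mult.assoc)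
        ultimately show "i = j \<and> i < nA * (nM*nB)" by simp
      next
        assume "i = j \<and> i < nA * (nM*nB)"
        then show "i div nB = j div nB \<and> i div nB < ?E \<and> ?b = ?b'"
          by (simp add: less_mult_imp_div_less mult.assoc)
      qed
      moreover have "(\<Sum>x<?E. complex_of_real (q (x div nM) (x mod nM) ?b) * complex_of_real (kern T x (i div nB)))
        = complex_of_real (astep nA nM (kern T) q (i div nB div nM) (i div nB mod nM) ?b)"
      proof (cases "nM = 0")
        case True then show ?thesis by (simp add: astep_def)
      next
        case False
        then have nM: "nM > 0" by simp
        have "(\<Sum>x<nA*nM. complex_of_real (q (x div nM) (x mod nM) ?b) * complex_of_real (kern T x (i div nB)))
          = (\<Sum>a<nA. \<Sum>m<nM. complex_of_real (q ((a*nM+m) div nM) ((a*nM+m) mod nM) ?b) * complex_of_real (kern T (a*nM+m) (i div nB)))"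
          by (rule sum_reindex2)
        also have "\<dots> = (\<Sum>a<nA. \<Sum>m<nM. complex_of_real (q a m ?b * kern T (a*nM+m) (i div nB)))"
          using nM by (intro sum.cong refl) (simp add: add.commute[of "_ * _"])
        finally show ?thesis by (simp add: astep_def)
      qed
      ultimately show ?thesis by (auto simp: diagc_def stm_def c_def)
    qed
    finally show ?thesis .
  qed
qed

lemma init_state:
  assumes "\<rho>A = diagc (nA*nM) (\<lambda>i. complex_of_real (al i))" "\<rho>B = diagc nB (\<lambda>i. complex_of_real (be i))"
  shows "kron nB \<rho>A \<rho>B = stm nA nM nB (\<lambda>a m b. al (a*nM+m) * be b)"
proof (intro ext)
  fix i j
  show "kron nB \<rho>A \<rho>B i j = stm nA nM nB (\<lambda>a m b. al (a*nM+m) * be b) i j"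
  proof (cases "nB = 0")
    case True then show ?thesis using assms by (simp add: kron_def stm_def diagc_def)
  next
    case False
    then have nB: "nB > 0" by simp
    have "(i div nB = j div nB \<and> i div nB < nA*nM \<and> i mod nB = j mod nB) \<longleftrightarrow> (i = j \<and> i < nA * (nM*nB))"
    proof
      assume h: "i div nB = j div nB \<and> i div nB < nA*nM \<and> i mod nB = j mod nB"
      then have "i = j" by (metis div_mult_mod_eq)
      moreover have "i < nA * (nM*nB)" using h nB
        by (metis div_less_iff_less_mult mult.assoc)
      ultimately show "i = j \<and> i < nA * (nM*nB)" by simp
    next
      assume "i = j \<and> i < nA * (nM*nB)"
      then show "i div nB = j div nB \<and> i div nB < nA*nM \<and> i mod nB = j mod nB"
        by (simp add: less_mult_imp_div_less mult.assoc)
    qed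
    moreover have "i div nB div nM * nM + i div nB mod nM = i div nB" by simp
    ultimately show ?thesis using assms nB by (auto simp: kron_def stm_def diagc_def)
  qed
qed

definition alpha :: "strategy \<Rightarrow> nat \<Rightarrow> real" where
  "alpha \<sigma> i = Re (st_init \<sigma> i i)"

definition emeas :: "strategy \<Rightarrow> outcome \<Rightarrow> nat \<Rightarrow> real" where
  "emeas \<sigma> w i = Re (st_meas \<sigma> w i i)"

fun evp :: "nat \<Rightarrow> nat \<Rightarrow> nat \<Rightarrow> strategy \<Rightarrow> strategy \<Rightarrow> nat \<Rightarrow> nat \<Rightarrow> nat \<Rightarrow> nat \<Rightarrow> real" where
  "evp nA nM nB \<sigma>A \<sigma>B 0 = (\<lambda>a m b. alpha \<sigma>A (a*nM+m) * alpha \<sigma>B b)"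
| "evp nA nM nB \<sigma>A \<sigma>B (Suc k) = astep nA nM (kern (st_ops \<sigma>A (Suc k)))
      (bstep nM nB (kern (st_ops \<sigma>B (Suc k))) (evp nA nM nB \<sigma>A \<sigma>B k))"

lemma sum3:
  fixes f :: "nat \<Rightarrow> nat \<Rightarrow> nat \<Rightarrow> 'a::comm_monoid_add"
  shows "(\<Sum>i<nA*(nM*nB). f (i div nB div nM) (i div nB mod nM) (i mod nB)) = (\<Sum>a<nA. \<Sum>m<nM. \<Sum>b<nB. f a m b)"
proof -
  have "(\<Sum>i<nA*(nM*nB). f (i div nB div nM) (i div nB mod nM) (i mod nB))
      = (\<Sum>a<nA. \<Sum>r<nM*nB. f ((a*(nM*nB)+r) div nB div nM) ((a*(nM*nB)+r) div nB mod nM) ((a*(nM*nB)+r) mod nB))"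
    by (rule sum_reindex2)
  also have "\<dots> = (\<Sum>a<nA. \<Sum>r<nM*nB. f a (r div nB) (r mod nB))"
    by (intro sum.cong refl) (simp add: idx_comb)
  also have "\<dots> = (\<Sum>a<nA. \<Sum>m<nM. \<Sum>b<nB. f a ((m*nB+b) div nB) ((m*nB+b) mod nB))"
    by (rule sum.cong[OF refl]) (rule sum_reindex2)
  also have "\<dots> = (\<Sum>a<nA. \<Sum>m<nM. \<Sum>b<nB. f a m b)"
    by (intro sum.cong refl) (simp add: add.commute[of "_ * _"])
  finally show ?thesis .
qed

lemma sum2:
  fixes f :: "nat \<Rightarrow> nat \<Rightarrow> 'a::comm_monoid_add"
  shows "(\<Sum>i<nA*nM. f (i div nM) (i mod nM)) = (\<Sum>a<nA. \<Sum>m<nM. f a m)"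
proof -
  have "(\<Sum>i<nA*nM. f (i div nM) (i mod nM)) = (\<Sum>a<nA. \<Sum>m<nM. f ((a*nM+m) div nM) ((a*nM+m) mod nM))"
    by (rule sum_reindex2)
  also have "\<dots> = (\<Sum>a<nA. \<Sum>m<nM. f a m)"
    by (intro sum.cong refl) (simp add: add.commute[of "_ * _"])
  finally show ?thesis .
qed

lemma state_props:
  assumes "is_state fs \<rho>" "claz fs"
  shows "\<rho> = diagc (adim fs) (\<lambda>i. complex_of_real (Re (\<rho> i i)))"
    and "\<And>i. i < adim fs \<Longrightarrow> 0 \<le> Re (\<rho> i i)"
    and "(\<Sum>i<adim fs. Re (\<rho> i i)) = 1"
proof -
  have ia: "in_alg fs \<rho>" and ps: "psd (adim fs) \<rho>" and tr: "mtrace (adim fs) \<rho> = 1"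
    using assms(1) by (auto simp: is_state_def)
  have "\<rho> = diagc (adim fs) (\<lambda>i. \<rho> i i)" by (rule in_alg_diagc[OF assms(2) ia])
  also have "\<dots> = diagc (adim fs) (\<lambda>i. complex_of_real (Re (\<rho> i i)))"
  proof -
    have "\<rho> i i = complex_of_real (Re (\<rho> i i))" if "i < adim fs" for i
      using psd_diag_entry[OF ps that] by (simp add: complex_eq_iff)
    then show ?thesis unfolding diagc_def by (intro ext) (metis (full_types))
  qed
  finally show "\<rho> = diagc (adim fs) (\<lambda>i. complex_of_real (Re (\<rho> i i)))" .
  show "\<And>i. i < adim fs \<Longrightarrow> 0 \<le> Re (\<rho> i i)" using psd_diag_entry[OF ps] by auto
  have "Re (mtrace (adim fs) \<rho>) = 1" using tr by simp
  then show "(\<Sum>i<adim fs. Re (\<rho> i i)) = 1" by (simp add: mtrace_def)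
qed

lemma obs_props:
  assumes "is_observable [(1,n)] E"
  shows "E w = diagc n (\<lambda>i. complex_of_real (Re (E w i i)))"
    and "\<And>i. i < n \<Longrightarrow> 0 \<le> Re (E w i i)"
    and "\<And>i. i < n \<Longrightarrow> Re (E Out0 i i) + Re (E Out1 i i) + Re (E Abort i i) = 1"
proof -
  have ia: "in_alg [(1,n)] (E w)" and ps: "psd n (E w)"
    using assms by (auto simp: is_observable_def)
  have "E w = diagc n (\<lambda>i. E w i i)" using in_alg_diagc[OF claz_simps(1) ia] by simp
  also have "\<dots> = diagc n (\<lambda>i. complex_of_real (Re (E w i i)))"
  proof -
    have "E w i i = complex_of_real (Re (E w i i))" if "i < n" for i
      using psd_diag_entry[OF ps that] by (simp add: complex_eq_iff)
    then show ?thesis unfolding diagc_def by (intro ext) (metis (full_types))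
  qed
  finally show "E w = diagc n (\<lambda>i. complex_of_real (Re (E w i i)))" .
  show "\<And>i. i < n \<Longrightarrow> 0 \<le> Re (E w i i)" using psd_diag_entry[OF ps] by auto
  fix i assume i: "i < n"
  have "(\<lambda>i j. E Out0 i j + E Out1 i j + E Abort i j) = eye n"
    using assms by (simp add: is_observable_def)
  then have "(\<lambda>i j. E Out0 i j + E Out1 i j + E Abort i j) i i = eye n i i" by (rule arg_cong)
  then have "E Out0 i i + E Out1 i i + E Abort i i = eye n i i" by simp
  then have "E Out0 i i + E Out1 i i + E Abort i i = 1" using i
    by (simp add: eye_def)
  then have "Re (E Out0 i i + E Out1 i i + E Abort i i) = 1" by simp
  then show "Re (E Out0 i i) + Re (E Out1 i i) + Re (E Abort i i) = 1" by simp
qed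

lemma evolve_eq:
  assumes sA: "stratA N (classical_alg nA) (classical_alg nM) \<sigma>A"
    and sB: "stratB N (classical_alg nB) (classical_alg nM) \<sigma>B"
  shows "k \<le> N div 2 \<Longrightarrow> evolve (classical_alg nA) (classical_alg nM) (classical_alg nB) \<sigma>A \<sigma>B k
           = stm nA nM nB (evp nA nM nB \<sigma>A \<sigma>B k)"
proof (induction k)
  case 0
  have stA: "is_state [(1,nA),(1,nM)] (st_init \<sigma>A)" using sA by (simp add: stratA_def classical_alg_def)
  have stB: "is_state [(1,nB)] (st_init \<sigma>B)" using sB by (simp add: stratB_def classical_alg_def)
  have "st_init \<sigma>A = diagc (nA*nM) (\<lambda>i. complex_of_real (alpha \<sigma>A i))"
    using state_props(1)[OF stA claz_simps(2)] unfolding alpha_def adim2 .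
  moreover have "st_init \<sigma>B = diagc nB (\<lambda>i. complex_of_real (alpha \<sigma>B i))"
    using state_props(1)[OF stB claz_simps(1)] unfolding alpha_def adim1 .
  ultimately show ?case by (simp add: classical_alg_def init_state)
next
  case (Suc k)
  have j: "Suc k \<in> {1..N div 2}" using Suc.prems by simp
  have opA: "is_operation [(1,nA),(1,nM)] [(1,nA),(1,nM)] (st_ops \<sigma>A (Suc k))"
    using sA j by (simp add: stratA_def classical_alg_def)
  have opB: "is_operation [(1,nM),(1,nB)] [(1,nM),(1,nB)] (st_ops \<sigma>B (Suc k))"
    using sB j by (simp add: stratB_def classical_alg_def)
  have IH: "evolve (classical_alg nA) (classical_alg nM) (classical_alg nB) \<sigma>A \<sigma>B k = stm nA nM nB (evp nA nM nB \<sigma>A \<sigma>B k)"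
    using Suc by simp
  show ?case
    unfolding evolve.simps(2) IH unfolding classical_alg_def adim1 adim2
    unfolding bob_step[OF opB] alice_step[OF opA] evp.simps(2) ..
qed

lemma prob_eq:
  assumes sA: "stratA N (classical_alg nA) (classical_alg nM) \<sigma>A"
    and sB: "stratB N (classical_alg nB) (classical_alg nM) \<sigma>B"
  shows "prob N (classical_alg nA) (classical_alg nM) (classical_alg nB) \<sigma>A \<sigma>B x y =
    (\<Sum>a<nA. \<Sum>m<nM. \<Sum>b<nB. emeas \<sigma>A x a * emeas \<sigma>B y b * evp nA nM nB \<sigma>A \<sigma>B (N div 2) a m b)"
proof -
  let ?p = "evp nA nM nB \<sigma>A \<sigma>B (N div 2)"
  let ?D = "nA*(nM*nB)"
  have obA: "is_observable [(1,nA)] (st_meas \<sigma>A)" using sA by (simp add: stratA_def classical_alg_def)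
  have obB: "is_observable [(1,nB)] (st_meas \<sigma>B)" using sB by (simp add: stratB_def classical_alg_def)
  have EA: "st_meas \<sigma>A x = diagc nA (\<lambda>i. complex_of_real (emeas \<sigma>A x i))"
    using obs_props(1)[OF obA] unfolding emeas_def .
  have EB: "st_meas \<sigma>B y = diagc nB (\<lambda>i. complex_of_real (emeas \<sigma>B y i))"
    using obs_props(1)[OF obB] unfolding emeas_def .
  let ?E = "kron nB (kron nM (st_meas \<sigma>A x) (eye nM)) (st_meas \<sigma>B y)"
  have ev: "evolve (classical_alg nA) (classical_alg nM) (classical_alg nB) \<sigma>A \<sigma>B (N div 2) = stm nA nM nB ?p"
    using evolve_eq[OF sA sB] by simp
  have "mtrace ?D (mmul ?D ?E (stm nA nM nB ?p)) = (\<Sum>i<?D. ?E i i * stm nA nM nB ?p i i)"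
  proof -
    have "(\<Sum>k<?D. ?E i k * stm nA nM nB ?p k i) = ?E i i * stm nA nM nB ?p i i" if "i < ?D" for i
    proof -
      have "(\<Sum>k<?D. ?E i k * stm nA nM nB ?p k i) = (\<Sum>k<?D. if k = i then ?E i k * stm nA nM nB ?p k i else 0)"
        by (intro sum.cong refl) (auto simp: stm_def)
      then show ?thesis using that by simp
    qed
    then show ?thesis by (simp add: mtrace_def mmul_def)
  qed
  also have "\<dots> = (\<Sum>i<?D. complex_of_real (emeas \<sigma>A x (i div nB div nM) * emeas \<sigma>B y (i mod nB) * ?p (i div nB div nM) (i div nB mod nM) (i mod nB)))"
  proof (intro sum.cong refl)
    fix i assume "i \<in> {..<?D}"
    then have i: "i < nA*(nM*nB)" by simp
    then have nM: "nM > 0" and nB: "nB > 0" by (cases "nM = 0"; cases "nB = 0"; simp)+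
    have a: "i div nB div nM < nA" using i
      by (metis div_mult2_eq less_mult_imp_div_less mult.commute)
    show "?E i i * stm nA nM nB ?p i i = complex_of_real (emeas \<sigma>A x (i div nB div nM) * emeas \<sigma>B y (i mod nB) * ?p (i div nB div nM) (i div nB mod nM) (i mod nB))"
      using i a nM nB by (simp add: kron_def EA EB diagc_def eye_def stm_def)
  qed
  finally have "mtrace ?D (mmul ?D ?E (stm nA nM nB ?p)) = complex_of_real (\<Sum>i<?D. emeas \<sigma>A x (i div nB div nM) * emeas \<sigma>B y (i mod nB) * ?p (i div nB div nM) (i div nB mod nM) (i mod nB))"
    by simp
  moreover have "(\<Sum>i<?D. emeas \<sigma>A x (i div nB div nM) * emeas \<sigma>B y (i mod nB) * ?p (i div nB div nM) (i div nB mod nM) (i mod nB))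
    = (\<Sum>a<nA. \<Sum>m<nM. \<Sum>b<nB. emeas \<sigma>A x a * emeas \<sigma>B y b * ?p a m b)"
    by (rule sum3[where f="\<lambda>a m b. emeas \<sigma>A x a * emeas \<sigma>B y b * ?p a m b"])
  ultimately show ?thesis
    unfolding prob_def ev unfolding classical_alg_def adim1 adim2 adim3 by simp
qed

lemma rot3:
  "(\<Sum>i\<in>A. \<Sum>j\<in>B. \<Sum>k\<in>C. f i j k) = (\<Sum>k\<in>C. \<Sum>i\<in>A. \<Sum>j\<in>B. (f i j k :: 'a::comm_monoid_add))"
proof -
  have "(\<Sum>i\<in>A. \<Sum>j\<in>B. \<Sum>k\<in>C. f i j k) = (\<Sum>i\<in>A. \<Sum>k\<in>C. \<Sum>j\<in>B. f i j k)"
    by (rule sum.cong[OF refl], rule sum.swap)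
  also have "\<dots> = (\<Sum>k\<in>C. \<Sum>i\<in>A. \<Sum>j\<in>B. f i j k)" by (rule sum.swap)
  finally show ?thesis .
qed

lemma swap22:
  "(\<Sum>i\<in>A. \<Sum>j\<in>B. \<Sum>k\<in>C. \<Sum>l\<in>E. f i j k l) = (\<Sum>k\<in>C. \<Sum>l\<in>E. \<Sum>i\<in>A. \<Sum>j\<in>B. (f i j k l :: 'a::comm_monoid_add))"
proof -
  have "(\<Sum>i\<in>A. \<Sum>j\<in>B. \<Sum>k\<in>C. \<Sum>l\<in>E. f i j k l) = (\<Sum>i\<in>A. \<Sum>k\<in>C. \<Sum>l\<in>E. \<Sum>j\<in>B. f i j k l)"
    by (rule sum.cong[OF refl], rule trans[OF rot3 rot3])
  also have "\<dots> = (\<Sum>k\<in>C. \<Sum>l\<in>E. \<Sum>i\<in>A. \<Sum>j\<in>B. f i j k l)"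
    by (rule trans[OF rot3 rot3])
  finally show ?thesis .
qed

lemma sum_pos_iff_ex:
  fixes f :: "'b \<Rightarrow> real"
  assumes "finite A" "\<And>x. x \<in> A \<Longrightarrow> 0 \<le> f x"
  shows "0 < sum f A \<longleftrightarrow> (\<exists>x\<in>A. 0 < f x)"
proof
  assume "0 < sum f A"
  then have "sum f A \<noteq> 0" by simp
  then show "\<exists>x\<in>A. 0 < f x" using sum_nonneg_eq_0_iff[OF assms] assms(2) by force
next
  assume "\<exists>x\<in>A. 0 < f x"
  then obtain x where "x \<in> A" "0 < f x" by blast
  then show "0 < sum f A" using member_le_sum[OF _ _ assms(1), of x f] assms(2) by force
qed

lemma row2:
  fixes K :: "nat \<Rightarrow> nat \<Rightarrow> real"
  assumes "x < nA*nM" "(\<Sum>y<nA*nM. K x y) = 1"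
  shows "(\<Sum>a<nA. \<Sum>m<nM. K x (a*nM+m)) = (1::real)"
  using assms(2) sum_reindex2[of "K x" nA nM] by simp

definition kpos :: "nat \<Rightarrow> (nat \<Rightarrow> nat \<Rightarrow> real) \<Rightarrow> bool" where
  "kpos D K \<longleftrightarrow> (\<forall>x<D. \<forall>y<D. 0 \<le> K x y) \<and> (\<forall>x<D. (\<Sum>y<D. K x y) = 1)"

definition ppos :: "nat \<Rightarrow> nat \<Rightarrow> nat \<Rightarrow> (nat \<Rightarrow> nat \<Rightarrow> nat \<Rightarrow> real) \<Rightarrow> bool" where
  "ppos nA nM nB p \<longleftrightarrow> (\<forall>a<nA. \<forall>m<nM. \<forall>b<nB. 0 \<le> p a m b)"

definition mass :: "nat \<Rightarrow> nat \<Rightarrow> nat \<Rightarrow> (nat \<Rightarrow> nat \<Rightarrow> nat \<Rightarrow> real) \<Rightarrow> real" where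
  "mass nA nM nB p = (\<Sum>a<nA. \<Sum>m<nM. \<Sum>b<nB. p a m b)"

lemma idx_lt: "m < nM \<Longrightarrow> b < nB \<Longrightarrow> m*nB + b < nM*(nB::nat)"
proof -
  assume "m < nM" "b < nB"
  then have "Suc m \<le> nM" by simp
  from mult_le_mono1[OF this, of nB] have "nB + m*nB \<le> nM*nB" by simp
  then show ?thesis using \<open>b < nB\<close> by linarith
qed

lemma bstep_ppos: "kpos (nM*nB) K \<Longrightarrow> ppos nA nM nB p \<Longrightarrow> ppos nA nM nB (bstep nM nB K p)"
  unfolding ppos_def kpos_def bstep_def by (auto simp: idx_lt intro!: sum_nonneg mult_nonneg_nonneg)

lemma astep_ppos: "kpos (nA*nM) K \<Longrightarrow> ppos nA nM nB q \<Longrightarrow> ppos nA nM nB (astep nA nM K q)"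
  unfolding ppos_def kpos_def astep_def by (auto simp: idx_lt intro!: sum_nonneg mult_nonneg_nonneg)

lemma bstep_mass: "kpos (nM*nB) K \<Longrightarrow> mass nA nM nB (bstep nM nB K p) = mass nA nM nB p"
proof -
  assume k: "kpos (nM*nB) K"
  have r: "(\<Sum>m'<nM. \<Sum>b'<nB. K (m*nB+b) (m'*nB+b')) = 1" if "m < nM" "b < nB" for m b
    using k idx_lt[OF that] row2[of "m*nB+b" nM nB K] unfolding kpos_def by auto
  have "(\<Sum>m'<nM. \<Sum>b'<nB. bstep nM nB K p a m' b') = (\<Sum>m<nM. \<Sum>b<nB. p a m b)" for a
  proof -
    have "(\<Sum>m'<nM. \<Sum>b'<nB. bstep nM nB K p a m' b')
        = (\<Sum>m'<nM. \<Sum>b'<nB. \<Sum>m<nM. \<Sum>b<nB. p a m b * K (m*nB+b) (m'*nB+b'))"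
      by (simp add: bstep_def)
    also have "\<dots> = (\<Sum>m<nM. \<Sum>b<nB. \<Sum>m'<nM. \<Sum>b'<nB. p a m b * K (m*nB+b) (m'*nB+b'))"
      by (rule swap22)
    also have "\<dots> = (\<Sum>m<nM. \<Sum>b<nB. p a m b * (\<Sum>m'<nM. \<Sum>b'<nB. K (m*nB+b) (m'*nB+b')))"
      by (simp add: sum_distrib_left)
    also have "\<dots> = (\<Sum>m<nM. \<Sum>b<nB. p a m b)"
      by (intro sum.cong refl) (simp add: r)
    finally show ?thesis .
  qed
  then show ?thesis by (simp add: mass_def)
qed

lemma astep_mass: "kpos (nA*nM) K \<Longrightarrow> mass nA nM nB (astep nA nM K q) = mass nA nM nB q"
proof -
  assume k: "kpos (nA*nM) K"
  have r: "(\<Sum>a'<nA. \<Sum>m'<nM. K (a*nM+m) (a'*nM+m')) = 1" if "a < nA" "m < nM" for a m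
    using k idx_lt[OF that] row2[of "a*nM+m" nA nM K] unfolding kpos_def by auto
  have "mass nA nM nB (astep nA nM K q) = (\<Sum>b<nB. \<Sum>a'<nA. \<Sum>m'<nM. astep nA nM K q a' m' b)"
    unfolding mass_def by (rule rot3)
  also have "\<dots> = (\<Sum>b<nB. \<Sum>a'<nA. \<Sum>m'<nM. \<Sum>a<nA. \<Sum>m<nM. q a m b * K (a*nM+m) (a'*nM+m'))"
    by (simp add: astep_def)
  also have "\<dots> = (\<Sum>b<nB. \<Sum>a<nA. \<Sum>m<nM. \<Sum>a'<nA. \<Sum>m'<nM. q a m b * K (a*nM+m) (a'*nM+m'))"
    by (rule sum.cong[OF refl], rule swap22)
  also have "\<dots> = (\<Sum>b<nB. \<Sum>a<nA. \<Sum>m<nM. q a m b * (\<Sum>a'<nA. \<Sum>m'<nM. K (a*nM+m) (a'*nM+m')))"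
    by (simp add: sum_distrib_left)
  also have "\<dots> = (\<Sum>b<nB. \<Sum>a<nA. \<Sum>m<nM. q a m b)"
    by (intro sum.cong refl) (simp add: r)
  also have "\<dots> = mass nA nM nB q"
    unfolding mass_def by (rule rot3[symmetric])
  finally show ?thesis .
qed

lemma bstep_pos_iff:
  assumes k: "kpos (nM*nB) K" and p: "ppos nA nM nB p" and a: "a < nA" and m': "m' < nM" and b': "b' < nB"
  shows "0 < bstep nM nB K p a m' b' \<longleftrightarrow> (\<exists>m<nM. \<exists>b<nB. 0 < p a m b \<and> 0 < K (m*nB+b) (m'*nB+b'))"
proof -
  have nn: "0 \<le> p a m b * K (m*nB+b) (m'*nB+b')" if "m < nM" "b < nB" for m b
    using k p a m' b' that idx_lt unfolding kpos_def ppos_def by (simp add: mult_nonneg_nonneg)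
  have "0 < bstep nM nB K p a m' b' \<longleftrightarrow> (\<exists>m<nM. 0 < (\<Sum>b<nB. p a m b * K (m*nB+b) (m'*nB+b')))"
    unfolding bstep_def by (subst sum_pos_iff_ex) (auto intro!: sum_nonneg nn)
  also have "\<dots> \<longleftrightarrow> (\<exists>m<nM. \<exists>b<nB. 0 < p a m b * K (m*nB+b) (m'*nB+b'))"
    by (intro ex_cong1 conj_cong refl, subst sum_pos_iff_ex) (auto intro!: nn)
  also have "\<dots> \<longleftrightarrow> (\<exists>m<nM. \<exists>b<nB. 0 < p a m b \<and> 0 < K (m*nB+b) (m'*nB+b'))"
    using nn k p a m' b' idx_lt unfolding kpos_def ppos_def
    by (metis (no_types, lifting) less_eq_real_def mult_eq_0_iff zero_less_mult_iff)
  finally show ?thesis .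
qed

lemma astep_pos_iff:
  assumes k: "kpos (nA*nM) K" and q: "ppos nA nM nB q" and a': "a' < nA" and m': "m' < nM" and b: "b < nB"
  shows "0 < astep nA nM K q a' m' b \<longleftrightarrow> (\<exists>a<nA. \<exists>m<nM. 0 < q a m b \<and> 0 < K (a*nM+m) (a'*nM+m'))"
proof -
  have nn: "0 \<le> q a m b * K (a*nM+m) (a'*nM+m')" if "a < nA" "m < nM" for a m
    using k q a' m' b that idx_lt unfolding kpos_def ppos_def by (simp add: mult_nonneg_nonneg)
  have "0 < astep nA nM K q a' m' b \<longleftrightarrow> (\<exists>a<nA. 0 < (\<Sum>m<nM. q a m b * K (a*nM+m) (a'*nM+m')))"
    unfolding astep_def by (subst sum_pos_iff_ex) (auto intro!: sum_nonneg nn)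
  also have "\<dots> \<longleftrightarrow> (\<exists>a<nA. \<exists>m<nM. 0 < q a m b * K (a*nM+m) (a'*nM+m'))"
    by (intro ex_cong1 conj_cong refl, subst sum_pos_iff_ex) (auto intro!: nn)
  also have "\<dots> \<longleftrightarrow> (\<exists>a<nA. \<exists>m<nM. 0 < q a m b \<and> 0 < K (a*nM+m) (a'*nM+m'))"
    using nn k q a' m' b idx_lt unfolding kpos_def ppos_def
    by (metis (no_types, lifting) less_eq_real_def mult_eq_0_iff zero_less_mult_iff)
  finally show ?thesis .
qed

lemma strat_kpos_A:
  assumes "stratA N (classical_alg nA) (classical_alg nM) \<sigma>" "j \<in> {1..N div 2}"
  shows "kpos (nA*nM) (kern (st_ops \<sigma> j))"
proof -
  have op: "is_operation [(1,nA),(1,nM)] [(1,nA),(1,nM)] (st_ops \<sigma> j)"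
    using assms by (simp add: stratA_def classical_alg_def)
  show ?thesis unfolding kpos_def
    using op_unit_props(3,4)[OF op claz_simps(2), unfolded adim2] by blast
qed

lemma strat_kpos_B:
  assumes "stratB N (classical_alg nB) (classical_alg nM) \<sigma>" "j \<in> {1..N div 2}"
  shows "kpos (nM*nB) (kern (st_ops \<sigma> j))"
proof -
  have op: "is_operation [(1,nM),(1,nB)] [(1,nM),(1,nB)] (st_ops \<sigma> j)"
    using assms by (simp add: stratB_def classical_alg_def)
  show ?thesis unfolding kpos_def
    using op_unit_props(3,4)[OF op claz_simps(2), unfolded adim2] by blast
qed

lemma evp_props:
  assumes sA: "stratA N (classical_alg nA) (classical_alg nM) \<sigma>A"
    and sB: "stratB N (classical_alg nB) (classical_alg nM) \<sigma>B"
  shows "k \<le> N div 2 \<Longrightarrow> ppos nA nM nB (evp nA nM nB \<sigma>A \<sigma>B k) \<and> mass nA nM nB (evp nA nM nB \<sigma>A \<sigma>B k) = 1"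
proof (induction k)
  case 0
  have stA: "is_state [(1,nA),(1,nM)] (st_init \<sigma>A)" using sA by (simp add: stratA_def classical_alg_def)
  have stB: "is_state [(1,nB)] (st_init \<sigma>B)" using sB by (simp add: stratB_def classical_alg_def)
  have pA: "0 \<le> alpha \<sigma>A i" if "i < nA*nM" for i
    using state_props(2)[OF stA claz_simps(2)] that by (simp add: alpha_def)
  have pB: "0 \<le> alpha \<sigma>B i" if "i < nB" for i
    using state_props(2)[OF stB claz_simps(1)] that by (simp add: alpha_def)
  have sAe: "(\<Sum>i<nA*nM. alpha \<sigma>A i) = 1"
    using state_props(3)[OF stA claz_simps(2)] by (simp add: alpha_def)
  have sBe: "(\<Sum>i<nB. alpha \<sigma>B i) = 1"
    using state_props(3)[OF stB claz_simps(1)] by (simp add: alpha_def)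
  have "ppos nA nM nB (evp nA nM nB \<sigma>A \<sigma>B 0)"
    unfolding ppos_def using pA pB idx_lt by (simp add: mult_nonneg_nonneg)
  moreover have "mass nA nM nB (evp nA nM nB \<sigma>A \<sigma>B 0) = 1"
  proof -
    have "mass nA nM nB (evp nA nM nB \<sigma>A \<sigma>B 0) = (\<Sum>a<nA. \<Sum>m<nM. alpha \<sigma>A (a*nM+m) * (\<Sum>b<nB. alpha \<sigma>B b))"
      by (simp add: mass_def sum_distrib_left)
    also have "\<dots> = (\<Sum>i<nA*nM. alpha \<sigma>A i)" using sBe by (simp add: sum_reindex2)
    finally show ?thesis using sAe by simp
  qed
  ultimately show ?case by simp
next
  case (Suc k)
  have j: "Suc k \<in> {1..N div 2}" using Suc.prems by simp
  have kA: "kpos (nA*nM) (kern (st_ops \<sigma>A (Suc k)))" by (rule strat_kpos_A[OF sA j])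
  have kB: "kpos (nM*nB) (kern (st_ops \<sigma>B (Suc k)))" by (rule strat_kpos_B[OF sB j])
  have IH: "ppos nA nM nB (evp nA nM nB \<sigma>A \<sigma>B k) \<and> mass nA nM nB (evp nA nM nB \<sigma>A \<sigma>B k) = 1"
    using Suc by simp
  show ?case
    using IH kA kB by (simp add: astep_ppos bstep_ppos astep_mass bstep_mass)
qed

lemma mass_weighted_one:
  assumes p: "ppos nA nM nB p" and ms: "mass nA nM nB p = 1"
    and e: "\<And>a m b. a < nA \<Longrightarrow> m < nM \<Longrightarrow> b < nB \<Longrightarrow> 0 < p a m b \<Longrightarrow> g a b = 1"
  shows "(\<Sum>a<nA. \<Sum>m<nM. \<Sum>b<nB. g a b * p a m b) = 1"
proof -
  have "(\<Sum>a<nA. \<Sum>m<nM. \<Sum>b<nB. g a b * p a m b) = mass nA nM nB p"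
    unfolding mass_def
  proof (intro sum.cong refl)
    fix a m b assume "a \<in> {..<nA}" "m \<in> {..<nM}" "b \<in> {..<nB}"
    then show "g a b * p a m b = p a m b" using p e unfolding ppos_def
      by (cases "p a m b = 0") (auto simp: less_le)
  qed
  then show ?thesis using ms by simp
qed

lemma mass_weighted_eq:
  assumes p: "ppos nA nM nB p" and ms: "mass nA nM nB p = 1"
    and g1: "\<And>a b. a < nA \<Longrightarrow> b < nB \<Longrightarrow> g a b \<le> 1"
    and sg: "(\<Sum>a<nA. \<Sum>m<nM. \<Sum>b<nB. g a b * p a m b) = 1"
    and pt: "a < nA" "m < nM" "b < nB" "0 < p a m b"
  shows "g a b = 1"
proof (rule ccontr)
  assume "g a b \<noteq> 1"
  then have lt: "g a b < 1" using g1 pt by force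
  have nn: "0 \<le> (1 - g a' b') * p a' m' b'" if "a' < nA" "m' < nM" "b' < nB" for a' m' b'
    using g1 p that unfolding ppos_def by simp
  have "(\<Sum>a<nA. \<Sum>m<nM. \<Sum>b<nB. (1 - g a b) * p a m b) = mass nA nM nB p - (\<Sum>a<nA. \<Sum>m<nM. \<Sum>b<nB. g a b * p a m b)"
    by (simp add: mass_def left_diff_distrib sum_subtractf)
  also have "\<dots> = 0" using ms sg by simp
  finally have z: "(\<Sum>a<nA. \<Sum>m<nM. \<Sum>b<nB. (1 - g a b) * p a m b) = 0" .
  have "0 < (\<Sum>a<nA. \<Sum>m<nM. \<Sum>b<nB. (1 - g a b) * p a m b)"
  proof -
    have "0 < (1 - g a b) * p a m b" using lt pt by simp
    then have "0 < (\<Sum>b<nB. (1 - g a b) * p a m b)"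
      using pt nn by (subst sum_pos_iff_ex) auto
    then have "0 < (\<Sum>m<nM. \<Sum>b<nB. (1 - g a b) * p a m b)"
      using pt nn by (subst sum_pos_iff_ex) (auto intro!: sum_nonneg)
    then show ?thesis
      using pt nn by (subst sum_pos_iff_ex) (auto intro!: sum_nonneg)
  qed
  then show False using z by simp
qed

lemma emeas_A:
  assumes "stratA N (classical_alg nA) (classical_alg nM) \<sigma>" "a < nA"
  shows "0 \<le> emeas \<sigma> w a" "emeas \<sigma> Out0 a + emeas \<sigma> Out1 a + emeas \<sigma> Abort a = 1"
proof -
  have ob: "is_observable [(1,nA)] (st_meas \<sigma>)" using assms by (simp add: stratA_def classical_alg_def)
  show "0 \<le> emeas \<sigma> w a" using obs_props(2)[OF ob] assms(2) by (simp add: emeas_def)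
  show "emeas \<sigma> Out0 a + emeas \<sigma> Out1 a + emeas \<sigma> Abort a = 1"
    using obs_props(3)[OF ob assms(2)] by (simp add: emeas_def)
qed

lemma emeas_B:
  assumes "stratB N (classical_alg nB) (classical_alg nM) \<sigma>" "b < nB"
  shows "0 \<le> emeas \<sigma> w b" "emeas \<sigma> Out0 b + emeas \<sigma> Out1 b + emeas \<sigma> Abort b = 1"
proof -
  have ob: "is_observable [(1,nB)] (st_meas \<sigma>)" using assms by (simp add: stratB_def classical_alg_def)
  show "0 \<le> emeas \<sigma> w b" using obs_props(2)[OF ob] assms(2) by (simp add: emeas_def)
  show "emeas \<sigma> Out0 b + emeas \<sigma> Out1 b + emeas \<sigma> Abort b = 1"
    using obs_props(3)[OF ob assms(2)] by (simp add: emeas_def)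
qed

lemma arith_agree:
  fixes x0 x1 y0 y1 :: real
  assumes "0 \<le> x0" "0 \<le> x1" "0 \<le> y0" "0 \<le> y1" "x0 + x1 \<le> 1" "y0 + y1 \<le> 1"
    and "x0 * y0 + x1 * y1 = 1"
  shows "(x0 = 1 \<and> y0 = 1) \<or> (x1 = 1 \<and> y1 = 1)"
proof -
  have "x0 * y0 \<le> x0" "x1 * y1 \<le> x1" using assms by (simp_all add: mult_left_le)
  then have s: "x0 + x1 = 1" using assms by linarith
  have "x0 * (1 - y0) + x1 * (1 - y1) = 0" using s assms(7) by (simp add: algebra_simps)
  moreover have "0 \<le> x0 * (1 - y0)" "0 \<le> x1 * (1 - y1)" using assms by simp_all
  ultimately have z: "x0 * (1 - y0) = 0" "x1 * (1 - y1) = 0" by linarith+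
  show ?thesis
  proof (cases "x0 = 0")
    case True
    then have "x1 = 1" using s by simp
    then show ?thesis using z by simp
  next
    case False
    then have "y0 = 1" using z by simp
    then have "y1 = 0" using assms by simp
    then have "x1 = 0" using z by simp
    then show ?thesis using s \<open>y0 = 1\<close> by simp
  qed
qed

locale honest =
  fixes N nA nM nB :: nat and \<sigma>A \<sigma>B :: strategy
  assumes sA: "stratA N (classical_alg nA) (classical_alg nM) \<sigma>A"
    and sB: "stratB N (classical_alg nB) (classical_alg nM) \<sigma>B"
    and p00: "prob N (classical_alg nA) (classical_alg nM) (classical_alg nB) \<sigma>A \<sigma>B Out0 Out0 = 1/2"
    and p11: "prob N (classical_alg nA) (classical_alg nM) (classical_alg nB) \<sigma>A \<sigma>B Out1 Out1 = 1/2"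
begin

abbreviation "n \<equiv> N div 2"
abbreviation "KA j \<equiv> kern (st_ops \<sigma>A j)"
abbreviation "KB j \<equiv> kern (st_ops \<sigma>B j)"
abbreviation "P k \<equiv> evp nA nM nB \<sigma>A \<sigma>B k"

lemma P_props: "k \<le> n \<Longrightarrow> ppos nA nM nB (P k) \<and> mass nA nM nB (P k) = 1"
  using evp_props[OF sA sB] by blast

lemma sizes_pos: "0 < nA" "0 < nM" "0 < nB"
proof -
  have "mass nA nM nB (P 0) = 1" using P_props[of 0] by simp
  then show "0 < nA" "0 < nM" "0 < nB" unfolding mass_def
    by (cases "nA = 0"; cases "nM = 0"; cases "nB = 0"; simp)+
qed

lemma agree:
  assumes "a < nA" "m < nM" "b < nB" "0 < P n a m b"
  shows "(emeas \<sigma>A Out0 a = 1 \<and> emeas \<sigma>B Out0 b = 1) \<or> (emeas \<sigma>A Out1 a = 1 \<and> emeas \<sigma>B Out1 b = 1)"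
proof -
  let ?g = "\<lambda>a b. emeas \<sigma>A Out0 a * emeas \<sigma>B Out0 b + emeas \<sigma>A Out1 a * emeas \<sigma>B Out1 b"
  have bnd: "0 \<le> emeas \<sigma>A Out0 a" "0 \<le> emeas \<sigma>A Out1 a" "emeas \<sigma>A Out0 a + emeas \<sigma>A Out1 a \<le> 1"
    if "a < nA" for a
  proof -
    have "0 \<le> emeas \<sigma>A w a" for w using emeas_A(1)[OF sA that] .
    then show "0 \<le> emeas \<sigma>A Out0 a" "0 \<le> emeas \<sigma>A Out1 a" "emeas \<sigma>A Out0 a + emeas \<sigma>A Out1 a \<le> 1"
      using emeas_A(2)[OF sA that] by (metis add_increasing2 le_add_same_cancel1)+
  qed
  have bndB: "0 \<le> emeas \<sigma>B Out0 b" "0 \<le> emeas \<sigma>B Out1 b" "emeas \<sigma>B Out0 b + emeas \<sigma>B Out1 b \<le> 1"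
    if "b < nB" for b
  proof -
    have "0 \<le> emeas \<sigma>B w b" for w using emeas_B(1)[OF sB that] .
    then show "0 \<le> emeas \<sigma>B Out0 b" "0 \<le> emeas \<sigma>B Out1 b" "emeas \<sigma>B Out0 b + emeas \<sigma>B Out1 b \<le> 1"
      using emeas_B(2)[OF sB that] by (metis add_increasing2 le_add_same_cancel1)+
  qed
  have g1: "?g a b \<le> 1" if "a < nA" "b < nB" for a b
  proof -
    have "emeas \<sigma>A Out0 a * emeas \<sigma>B Out0 b \<le> emeas \<sigma>A Out0 a"
      using bnd[OF that(1)] bndB[OF that(2)] by (simp add: mult_left_le)
    moreover have "emeas \<sigma>A Out1 a * emeas \<sigma>B Out1 b \<le> emeas \<sigma>A Out1 a"
      using bnd[OF that(1)] bndB[OF that(2)] by (simp add: mult_left_le)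
    ultimately show ?thesis using bnd[OF that(1)] by linarith
  qed
  have "(\<Sum>a<nA. \<Sum>m<nM. \<Sum>b<nB. ?g a b * P n a m b) =
      prob N (classical_alg nA) (classical_alg nM) (classical_alg nB) \<sigma>A \<sigma>B Out0 Out0
    + prob N (classical_alg nA) (classical_alg nM) (classical_alg nB) \<sigma>A \<sigma>B Out1 Out1"
    unfolding prob_eq[OF sA sB] by (simp add: sum.distrib algebra_simps)
  also have "\<dots> = 1" using p00 p11 by simp
  finally have "(\<Sum>a<nA. \<Sum>m<nM. \<Sum>b<nB. ?g a b * P n a m b) = 1" .
  then have "?g a b = 1"
    using mass_weighted_eq[of nA nM nB "P n" ?g a m b] P_props[of n] g1 assms by auto
  then show ?thesis using arith_agree bnd[OF assms(1)] bndB[OF assms(3)] by blast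
qed

end

type_synonym node = "nat list \<times> nat list \<times> nat"

context honest
begin

definition stA :: "nat \<Rightarrow> nat list \<Rightarrow> nat \<Rightarrow> nat \<Rightarrow> nat list" where
  "stA j xs m1 m2 = filter (\<lambda>a'. \<exists>a\<in>set xs. 0 < KA j (a*nM+m1) (a'*nM+m2)) [0..<nA]"

definition stB :: "nat \<Rightarrow> nat list \<Rightarrow> nat \<Rightarrow> nat \<Rightarrow> nat list" where
  "stB j ys m m1 = filter (\<lambda>b'. \<exists>b\<in>set ys. 0 < KB j (m*nB+b) (m1*nB+b')) [0..<nB]"

definition SA0 :: "nat \<Rightarrow> nat list" where
  "SA0 m0 = filter (\<lambda>a. 0 < alpha \<sigma>A (a*nM+m0)) [0..<nA]"

definition SB0 :: "nat list" where
  "SB0 = filter (\<lambda>b. 0 < alpha \<sigma>B b) [0..<nB]"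

fun wA :: "nat \<Rightarrow> node \<Rightarrow> bool" where
  "wA 0 (xs, ys, m) = (\<forall>b\<in>set ys. emeas \<sigma>B Out0 b = 1)"
| "wA (Suc r) (xs, ys, m) = (\<forall>m1<nM. stB (n - r) ys m m1 \<noteq> [] \<longrightarrow>
      (\<exists>m2<nM. stA (n - r) xs m1 m2 \<noteq> [] \<and> wA r (stA (n - r) xs m1 m2, stB (n - r) ys m m1, m2)))"

definition good :: "nat \<Rightarrow> node \<Rightarrow> bool" where
  "good k X \<longleftrightarrow> (case X of (xs, ys, m) \<Rightarrow> m < nM \<and> set xs \<subseteq> {..<nA} \<and> set ys \<subseteq> {..<nB} \<and>
      (\<forall>a\<in>set xs. \<forall>b\<in>set ys. 0 < P k a m b))"

lemma good0: "m0 < nM \<Longrightarrow> good 0 (SA0 m0, SB0, m0)"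
  by (auto simp: good_def SA0_def SB0_def)

lemma good_step:
  assumes g: "good k (xs, ys, m)" and k: "k < n" and m1: "m1 < nM" and m2: "m2 < nM"
  shows "good (Suc k) (stA (Suc k) xs m1 m2, stB (Suc k) ys m m1, m2)"
proof -
  have j: "Suc k \<in> {1..n}" using k by simp
  have kA: "kpos (nA*nM) (KA (Suc k))" by (rule strat_kpos_A[OF sA j])
  have kB: "kpos (nM*nB) (KB (Suc k))" by (rule strat_kpos_B[OF sB j])
  have pp: "ppos nA nM nB (P k)" using P_props[of k] k by simp
  have gm: "m < nM" and gx: "set xs \<subseteq> {..<nA}" and gy: "set ys \<subseteq> {..<nB}"
    and gp: "\<forall>a\<in>set xs. \<forall>b\<in>set ys. 0 < P k a m b" using g by (auto simp: good_def)
  have "0 < P (Suc k) a' m2 b'" if a': "a' \<in> set (stA (Suc k) xs m1 m2)" and b': "b' \<in> set (stB (Suc k) ys m m1)" for a' b'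
  proof -
    obtain a where a: "a \<in> set xs" "0 < KA (Suc k) (a*nM+m1) (a'*nM+m2)" and a'n: "a' < nA"
      using a' by (auto simp: stA_def)
    obtain b where b: "b \<in> set ys" "0 < KB (Suc k) (m*nB+b) (m1*nB+b')" and b'n: "b' < nB"
      using b' by (auto simp: stB_def)
    have an: "a < nA" and bn: "b < nB" using a b gx gy by auto
    have "0 < bstep nM nB (KB (Suc k)) (P k) a m1 b'"
      using bstep_pos_iff[OF kB pp an m1 b'n] gp a b gm bn by blast
    moreover have "ppos nA nM nB (bstep nM nB (KB (Suc k)) (P k))" using bstep_ppos[OF kB pp] .
    ultimately have "0 < astep nA nM (KA (Suc k)) (bstep nM nB (KB (Suc k)) (P k)) a' m2 b'"
      using astep_pos_iff[OF kA _ a'n m2 b'n] an m1 a by blast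
    then show ?thesis by simp
  qed
  then show ?thesis using m2 by (auto simp: good_def stA_def stB_def)
qed

lemma leaf_B:
  assumes g: "good n (xs, ys, m)" and w: "\<not> wA 0 (xs, ys, m)" and a: "a \<in> set xs"
  shows "emeas \<sigma>A Out1 a = 1"
proof -
  obtain b where b: "b \<in> set ys" "emeas \<sigma>B Out0 b \<noteq> 1" using w by auto
  have "0 < P n a m b" "a < nA" "b < nB" "m < nM" using g a b by (auto simp: good_def)
  then show ?thesis using agree b(2) by blast
qed

end

definition detK :: "(nat \<Rightarrow> nat) \<Rightarrow> nat \<Rightarrow> nat \<Rightarrow> real" where
  "detK g x y = (if y = g x then 1 else 0)"

definition detop :: "nat \<Rightarrow> (nat \<Rightarrow> nat) \<Rightarrow> cmat \<Rightarrow> cmat" where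
  "detop D g = kop D (detK g)"

lemma detop_op:
  assumes "claz fs" "\<And>x. x < adim fs \<Longrightarrow> g x < adim fs"
  shows "is_operation fs fs (detop (adim fs) g)"
  unfolding detop_def
proof (rule kop_op[OF assms(1)])
  show "0 \<le> detK g x y" for x y by (simp add: detK_def)
  fix x assume "x < adim fs"
  then have "g x < adim fs" by (rule assms(2))
  then show "(\<Sum>y<adim fs. detK g x y) = 1" by (simp add: detK_def)
qed

lemma kern_detop: "x < D \<Longrightarrow> y < D \<Longrightarrow> kern (detop D g) x y = detK g x y"
  unfolding detop_def by (rule kern_kop)

lemma psd_diagc:
  assumes "\<And>i. i < D \<Longrightarrow> 0 \<le> c i"
  shows "psd D (diagc D (\<lambda>i. complex_of_real (c i)))"
proof -
  have "(\<Sum>i<D. \<Sum>j<D. cnj (v i) * diagc D (\<lambda>i. complex_of_real (c i)) i j * v j)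
      = (\<Sum>i<D. complex_of_real (c i * (cmod (v i))^2))" for v
  proof (intro sum.cong refl)
    fix i assume i: "i \<in> {..<D}"
    have "(\<Sum>j<D. cnj (v i) * diagc D (\<lambda>i. complex_of_real (c i)) i j * v j)
        = (\<Sum>j<D. if j = i then cnj (v i) * complex_of_real (c i) * v i else 0)"
      by (intro sum.cong refl) (auto simp: diagc_def)
    also have "\<dots> = cnj (v i) * complex_of_real (c i) * v i" using i by simp
    also have "\<dots> = complex_of_real (c i) * (v i * cnj (v i))" by (simp add: mult_ac)
    also have "\<dots> = complex_of_real (c i * (cmod (v i))^2)"
      by (simp only: complex_norm_square[symmetric] of_real_mult of_real_power)
    finally show "(\<Sum>j<D. cnj (v i) * diagc D (\<lambda>i. complex_of_real (c i)) i j * v j)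
        = complex_of_real (c i * (cmod (v i))^2)" .
  qed
  moreover have "0 \<le> (\<Sum>i<D. c i * (cmod (v i))^2)" for v
    using assms by (intro sum_nonneg) simp
  ultimately show ?thesis unfolding psd_def
    by (simp add: Re_sum Im_sum del: of_real_mult of_real_power)
qed

definition ptstate :: "nat \<Rightarrow> nat \<Rightarrow> cmat" where
  "ptstate D c0 = diagc D (\<lambda>i. complex_of_real (if i = c0 then 1 else 0))"

lemma ptstate_state:
  assumes "claz fs" "c0 < adim fs"
  shows "is_state fs (ptstate (adim fs) c0)"
proof -
  have "mtrace (adim fs) (ptstate (adim fs) c0) = (\<Sum>i<adim fs. if i = c0 then 1 else 0)"
    unfolding mtrace_def ptstate_def by (intro sum.cong refl) (auto simp: diagc_def)
  also have "\<dots> = 1" using assms(2) by simp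
  finally show ?thesis
    unfolding is_state_def ptstate_def
    using diagc_in_alg[OF assms(1)] psd_diagc[of "adim fs" "\<lambda>i. if i = c0 then 1 else 0"]
    by (auto simp: ptstate_def)
qed

definition meas1 :: "nat \<Rightarrow> outcome \<Rightarrow> outcome \<Rightarrow> cmat" where
  "meas1 D w0 w = diagc D (\<lambda>i. complex_of_real (if w = w0 then 1 else 0))"

lemma meas1_obs: "is_observable [(1,D)] (meas1 D w0)"
  unfolding is_observable_def
proof
  show "\<forall>w. in_alg [(1, D)] (meas1 D w0 w) \<and> psd (adim [(1, D)]) (meas1 D w0 w)"
    using diagc_in_alg[OF claz_simps(1), of D] psd_diagc[of D "\<lambda>i. if _ = w0 then 1 else 0"]
    by (auto simp: meas1_def)
  show "(\<lambda>i j. meas1 D w0 Out0 i j + meas1 D w0 Out1 i j + meas1 D w0 Abort i j) = eye (adim [(1, D)])"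
    by (cases w0) (auto simp: meas1_def diagc_def eye_def fun_eq_iff)
qed

definition cheat :: "nat \<Rightarrow> nat \<Rightarrow> nat \<Rightarrow> (nat \<Rightarrow> nat \<Rightarrow> nat) \<Rightarrow> nat \<Rightarrow> outcome \<Rightarrow> strategy" where
  "cheat Di c0 Do gs Dm w0 = \<lparr>st_init = ptstate Di c0, st_ops = (\<lambda>j. detop Do (gs j)), st_meas = meas1 Dm w0\<rparr>"

lemma cheatA_strat:
  assumes "c0 < nR*nM" "\<And>j x. x < nR*nM \<Longrightarrow> gs j x < nR*nM"
  shows "stratA N (classical_alg nR) (classical_alg nM) (cheat (nR*nM) c0 (nR*nM) gs nR w0)"
proof -
  have "is_state [(1,nR),(1,nM)] (ptstate (nR*nM) c0)"
    using ptstate_state[OF claz_simps(2), of c0 nR nM] assms(1) by simp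
  moreover have "is_operation [(1,nR),(1,nM)] [(1,nR),(1,nM)] (detop (nR*nM) (gs j))" for j
    using detop_op[OF claz_simps(2), of nR nM "gs j"] assms(2) by simp
  moreover have "is_observable [(1,nR)] (meas1 nR w0)" by (rule meas1_obs)
  ultimately show ?thesis
    by (simp add: stratA_def cheat_def classical_alg_def meas1_obs)
qed

lemma cheatB_strat:
  assumes "c0 < nR" "\<And>j x. x < nM*nR \<Longrightarrow> gs j x < nM*nR"
  shows "stratB N (classical_alg nR) (classical_alg nM) (cheat nR c0 (nM*nR) gs nR w0)"
proof -
  have "is_state [(1,nR)] (ptstate nR c0)"
    using ptstate_state[OF claz_simps(1), of c0 nR] assms(1) by simp
  moreover have "is_operation [(1,nM),(1,nR)] [(1,nM),(1,nR)] (detop (nM*nR) (gs j))" for j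
    using detop_op[OF claz_simps(2), of nM nR "gs j"] assms(2) by simp
  moreover have "is_observable [(1,nR)] (meas1 nR w0)" by (rule meas1_obs)
  ultimately show ?thesis
    by (simp add: stratB_def cheat_def classical_alg_def meas1_obs)
qed

lemma cheat_alpha: "i < Di \<Longrightarrow> alpha (cheat Di c0 Do gs Dm w0) i = (if i = c0 then 1 else 0)"
  by (simp add: alpha_def cheat_def ptstate_def diagc_def)

lemma cheat_emeas: "i < Dm \<Longrightarrow> emeas (cheat Di c0 Do gs Dm w0) w0 i = 1"
  by (simp add: emeas_def cheat_def meas1_def diagc_def)

lemma cheat_kern: "x < Do \<Longrightarrow> y < Do \<Longrightarrow> kern (st_ops (cheat Di c0 Do gs Dm w0) j) x y = detK (gs j) x y"
  by (simp add: cheat_def kern_detop)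

lemma divmod_uniq:
  fixes r m R M2 nM :: nat
  assumes "r*nM + m = R*nM + M2" "m < nM" "M2 < nM"
  shows "r = R \<and> m = M2"
proof -
  have "(r*nM + m) div nM = r" "(R*nM + M2) div nM = R" "(r*nM + m) mod nM = m" "(R*nM + M2) mod nM = M2"
    using assms(2,3) by (simp_all add: add.commute[of "_ * _"])
  then show ?thesis using assms(1) by metis
qed

lemma filt_bound: "set (filter P [0..<k]) \<subseteq> {..<k}" "length (filter P [0..<k]) \<le> k"
  by auto (metis diff_zero length_filter_le length_upt)

context honest
begin

lemma wA_step:
  assumes "k < n"
  shows "wA (n - k) (xs, ys, m) = (\<forall>m1<nM. stB (Suc k) ys m m1 \<noteq> [] \<longrightarrow>
      (\<exists>m2<nM. stA (Suc k) xs m1 m2 \<noteq> [] \<and> wA (n - Suc k) (stA (Suc k) xs m1 m2, stB (Suc k) ys m m1, m2)))"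
proof -
  have e: "n - k = Suc (n - Suc k)" "n - (n - Suc k) = Suc k" using assms by auto
  show ?thesis unfolding e(1) wA.simps e(2) ..
qed

definition LA :: "node set" where
  "LA = {(xs, ys, m). set xs \<subseteq> {..<nA} \<and> length xs \<le> nA \<and> set ys \<subseteq> {..<nB} \<and> length ys \<le> nB \<and> m < nM}"

lemma LA_finite: "finite LA"
proof -
  have "LA \<subseteq> {xs. set xs \<subseteq> {..<nA} \<and> length xs \<le> nA} \<times> {ys. set ys \<subseteq> {..<nB} \<and> length ys \<le> nB} \<times> {..<nM}"
    by (auto simp: LA_def)
  moreover have "finite ({xs. set xs \<subseteq> {..<nA} \<and> length xs \<le> nA} \<times> {ys. set ys \<subseteq> {..<nB} \<and> length ys \<le> nB} \<times> {..<nM})"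
    by (intro finite_cartesian_product finite_lists_length_le) auto
  ultimately show ?thesis by (rule finite_subset)
qed

definition nRA :: nat where "nRA = Suc (Max (to_nat ` LA))"

lemma codeA_lt: "X \<in> LA \<Longrightarrow> to_nat X < nRA"
  unfolding nRA_def using LA_finite by (simp add: le_imp_less_Suc)

lemma st_in_LA: "m < nM \<Longrightarrow> (filter Pa [0..<nA], filter Qa [0..<nB], m) \<in> LA"
  using filt_bound[of Pa nA] filt_bound[of Qa nB] by (simp add: LA_def)

definition okA :: "nat \<Rightarrow> nat list \<Rightarrow> nat list \<Rightarrow> nat \<Rightarrow> nat \<Rightarrow> nat \<Rightarrow> bool" where
  "okA j xs ys m m1 m2 \<longleftrightarrow> stA j xs m1 m2 \<noteq> [] \<and> wA (n - j) (stA j xs m1 m2, stB j ys m m1, m2)"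

definition gAn :: "nat \<Rightarrow> nat \<Rightarrow> node \<Rightarrow> nat \<Rightarrow> nat" where
  "gAn j m1 X x = (case X of (xs, ys, m) \<Rightarrow>
     if (\<exists>m2<nM. okA j xs ys m m1 m2)
     then (let m2 = (LEAST m2. m2 < nM \<and> okA j xs ys m m1 m2) in to_nat (stA j xs m1 m2, stB j ys m m1, m2) * nM + m2)
     else x)"

definition gA :: "nat \<Rightarrow> nat \<Rightarrow> nat" where
  "gA j x = gAn j (x mod nM) (from_nat (x div nM)) x"

lemma gA_bound: "x < nRA*nM \<Longrightarrow> gA j x < nRA*nM"
proof -
  assume x: "x < nRA*nM"
  obtain xs ys m where X: "(from_nat (x div nM) :: node) = (xs, ys, m)" by (metis prod.exhaust)
  show ?thesis
  proof (cases "\<exists>m2<nM. okA j xs ys m (x mod nM) m2")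
    case True
    define m2 where "m2 = (LEAST m2. m2 < nM \<and> okA j xs ys m (x mod nM) m2)"
    have m2: "m2 < nM" using LeastI_ex[OF True[simplified Bex_def[symmetric]]] True unfolding m2_def
      by (metis (mono_tags, lifting) LeastI_ex)
    have "to_nat (stA j xs (x mod nM) m2, stB j ys m (x mod nM), m2) < nRA"
      using codeA_lt st_in_LA[OF m2] unfolding stA_def stB_def by blast
    then have "to_nat (stA j xs (x mod nM) m2, stB j ys m (x mod nM), m2) * nM + m2 < nRA * nM"
      using m2 idx_lt by blast
    then show ?thesis using True X by (simp add: gA_def gAn_def m2_def Let_def)
  next
    case False
    then show ?thesis using X x by (auto simp: gA_def gAn_def)
  qed
qed

lemma gA_spec:
  assumes X: "(from_nat r :: node) = (xs, ys, m)" and m1: "m1 < nM" and ex: "\<exists>m2<nM. okA j xs ys m m1 m2"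
  shows "\<exists>m2<nM. okA j xs ys m m1 m2 \<and> gA j (r*nM + m1) = to_nat (stA j xs m1 m2, stB j ys m m1, m2) * nM + m2"
proof -
  define m2 where "m2 = (LEAST m2. m2 < nM \<and> okA j xs ys m m1 m2)"
  have m2: "m2 < nM \<and> okA j xs ys m m1 m2" unfolding m2_def by (rule LeastI_ex) (use ex in blast)
  have d: "(r*nM + m1) div nM = r" "(r*nM + m1) mod nM = m1" using m1 by (simp_all add: add.commute[of "_ * _"])
  have g: "gA j (r*nM + m1) = gAn j m1 (xs, ys, m) (r*nM + m1)" by (simp only: gA_def d X)
  have "gAn j m1 (xs, ys, m) (r*nM + m1) = to_nat (stA j xs m1 m2, stB j ys m m1, m2) * nM + m2"
    using ex unfolding gAn_def m2_def by (simp add: Let_def)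
  then have "gA j (r*nM + m1) = to_nat (stA j xs m1 m2, stB j ys m m1, m2) * nM + m2" using g by simp
  then show ?thesis using m2 by (intro exI[of _ m2]) simp
qed

end

context honest
begin

lemma SA0_SB0_LA: "m0 < nM \<Longrightarrow> (SA0 m0, SB0, m0) \<in> LA"
  unfolding SA0_def SB0_def by (rule st_in_LA)

lemma alice_cheat:
  assumes m0: "m0 < nM" and ne: "SA0 m0 \<noteq> []" and win: "wA n (SA0 m0, SB0, m0)"
  shows "\<exists>nR \<sigma>'. 1 \<le> nR \<and> stratA N (classical_alg nR) (classical_alg nM) \<sigma>' \<and>
           prob N (classical_alg nR) (classical_alg nM) (classical_alg nB) \<sigma>' \<sigma>B Out0 Out0 = 1"
proof -
  define X0 where "X0 = (SA0 m0, SB0, m0)"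
  define c0 where "c0 = to_nat X0 * nM + m0"
  define \<sigma>C where "\<sigma>C = cheat (nRA*nM) c0 (nRA*nM) gA nRA Out0"
  have c0: "c0 < nRA*nM" unfolding c0_def X0_def
    using idx_lt[OF codeA_lt[OF SA0_SB0_LA[OF m0]] m0] .
  have sC: "stratA N (classical_alg nRA) (classical_alg nM) \<sigma>C"
    unfolding \<sigma>C_def by (rule cheatA_strat[OF c0 gA_bound])
  let ?Q = "evp nRA nM nB \<sigma>C \<sigma>B"
  have inv: "\<forall>r<nRA. \<forall>m<nM. \<forall>b<nB. 0 < ?Q k r m b \<longrightarrow>
      (\<exists>xs ys. from_nat r = (xs, ys, m) \<and> xs \<noteq> [] \<and> b \<in> set ys \<and> wA (n - k) (xs, ys, m))"
    if "k \<le> n" for k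
    using that
  proof (induction k)
    case 0
    show ?case
    proof (intro allI impI)
      fix r m b assume r: "r < nRA" and m: "m < nM" and b: "b < nB" and pos: "0 < ?Q 0 r m b"
      have rm: "r*nM + m < nRA*nM" using idx_lt[OF r m] .
      have "0 < alpha \<sigma>C (r*nM+m)" "0 < alpha \<sigma>B b"
        using pos P_props[of 0] evp_props[OF sC sB, of 0] r m b
        by (auto simp: zero_less_mult_iff ppos_def)
           (metis alpha_def cheat_alpha less_numeral_extra(3) rm \<sigma>C_def not_less_iff_gr_or_eq zero_less_one)+
      then have "r*nM + m = c0" and bpos: "0 < alpha \<sigma>B b"
        using cheat_alpha[OF rm] unfolding \<sigma>C_def by (auto split: if_splits)
      then have "r = to_nat X0" "m = m0" using divmod_uniq[of r nM m "to_nat X0" m0] m m0 c0_def by auto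
      then show "\<exists>xs ys. from_nat r = (xs, ys, m) \<and> xs \<noteq> [] \<and> b \<in> set ys \<and> wA (n - 0) (xs, ys, m)"
        using ne win bpos b by (auto simp: X0_def SB0_def)
    qed
  next
    case (Suc k)
    have k: "k < n" using Suc.prems by simp
    have j: "Suc k \<in> {1..n}" using k by simp
    have IH: "\<forall>r<nRA. \<forall>m<nM. \<forall>b<nB. 0 < ?Q k r m b \<longrightarrow>
      (\<exists>xs ys. from_nat r = (xs, ys, m) \<and> xs \<noteq> [] \<and> b \<in> set ys \<and> wA (n - k) (xs, ys, m))"
      using Suc by simp
    have kC: "kpos (nRA*nM) (kern (st_ops \<sigma>C (Suc k)))" by (rule strat_kpos_A[OF sC j])
    have kB: "kpos (nM*nB) (KB (Suc k))" by (rule strat_kpos_B[OF sB j])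
    have pQ: "ppos nRA nM nB (?Q k)" using evp_props[OF sC sB, of k] k by simp
    have pM: "ppos nRA nM nB (bstep nM nB (KB (Suc k)) (?Q k))" by (rule bstep_ppos[OF kB pQ])
    show ?case
    proof (intro allI impI)
      fix r' m' b' assume r': "r' < nRA" and m': "m' < nM" and b': "b' < nB" and pos: "0 < ?Q (Suc k) r' m' b'"
      have "0 < astep nRA nM (kern (st_ops \<sigma>C (Suc k))) (bstep nM nB (KB (Suc k)) (?Q k)) r' m' b'"
        using pos by simp
      then obtain r m1 where r: "r < nRA" and m1: "m1 < nM"
        and pmid: "0 < bstep nM nB (KB (Suc k)) (?Q k) r m1 b'"
        and kpos1: "0 < kern (st_ops \<sigma>C (Suc k)) (r*nM+m1) (r'*nM+m')"
        using astep_pos_iff[OF kC pM r' m' b'] by blast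
      obtain m b where m: "m < nM" and b: "b < nB" and pq: "0 < ?Q k r m b"
        and kb: "0 < KB (Suc k) (m*nB+b) (m1*nB+b')"
        using pmid bstep_pos_iff[OF kB pQ r m1 b'] by blast
      obtain xs ys where X: "from_nat r = (xs, ys, m)" and xs: "xs \<noteq> []" and bys: "b \<in> set ys"
        and w: "wA (n - k) (xs, ys, m)"
        using IH r m b pq by blast
      have "b' \<in> set (stB (Suc k) ys m m1)" using bys kb b' by (auto simp: stB_def)
      then have "stB (Suc k) ys m m1 \<noteq> []" by auto
      then have ex: "\<exists>m2<nM. okA (Suc k) xs ys m m1 m2"
        using w wA_step[OF k] m1 unfolding okA_def by blast
      obtain m2 where m2: "m2 < nM" and ok: "okA (Suc k) xs ys m m1 m2"
        and gv: "gA (Suc k) (r*nM + m1) = to_nat (stA (Suc k) xs m1 m2, stB (Suc k) ys m m1, m2) * nM + m2"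
        using gA_spec[OF X m1 ex] by blast
      have "kern (st_ops \<sigma>C (Suc k)) (r*nM+m1) (r'*nM+m') = detK (gA (Suc k)) (r*nM+m1) (r'*nM+m')"
        unfolding \<sigma>C_def by (rule cheat_kern) (use idx_lt r m1 r' m' in auto)
      then have "r'*nM + m' = gA (Suc k) (r*nM + m1)" using kpos1 by (auto simp: detK_def split: if_splits)
      then have "r' = to_nat (stA (Suc k) xs m1 m2, stB (Suc k) ys m m1, m2) \<and> m' = m2"
        using gv divmod_uniq m' m2 by metis
      then show "\<exists>xs ys. from_nat r' = (xs, ys, m') \<and> xs \<noteq> [] \<and> b' \<in> set ys \<and> wA (n - Suc k) (xs, ys, m')"
        using ok \<open>b' \<in> set (stB (Suc k) ys m m1)\<close> unfolding okA_def by auto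
    qed
  qed
  have "prob N (classical_alg nRA) (classical_alg nM) (classical_alg nB) \<sigma>C \<sigma>B Out0 Out0 = 1"
    unfolding prob_eq[OF sC sB]
  proof (rule mass_weighted_one)
    show "ppos nRA nM nB (?Q n)" "mass nRA nM nB (?Q n) = 1" using evp_props[OF sC sB, of n] by auto
    fix r m b assume r: "r < nRA" and m: "m < nM" and b: "b < nB" and pos: "0 < ?Q n r m b"
    obtain xs ys where "from_nat r = (xs, ys, m)" "b \<in> set ys" "wA (n - n) (xs, ys, m)"
      using inv[of n] r m b pos by blast
    then have "emeas \<sigma>B Out0 b = 1" by simp
    moreover have "emeas \<sigma>C Out0 r = 1" unfolding \<sigma>C_def using r by (rule cheat_emeas)
    ultimately show "emeas \<sigma>C Out0 r * emeas \<sigma>B Out0 b = 1" by simp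
  qed
  then show ?thesis using sC by (intro exI[of _ nRA] exI[of _ \<sigma>C]) (simp add: nRA_def)
qed

end

context honest
begin

definition LB :: "node option set" where "LB = insert None (Some ` LA)"

lemma LB_finite: "finite LB" unfolding LB_def using LA_finite by simp

definition nRB :: nat where "nRB = Suc (Max (to_nat ` LB))"

lemma codeB_lt: "Y \<in> LB \<Longrightarrow> to_nat Y < nRB"
  unfolding nRB_def using LB_finite by (simp add: le_imp_less_Suc)

definition nodeOf :: "nat \<Rightarrow> node option \<Rightarrow> nat \<Rightarrow> node" where
  "nodeOf j mem m = (case mem of None \<Rightarrow> (SA0 m, SB0, m) | Some (xs, ys1, m1) \<Rightarrow> (stA (j - 1) xs m1 m, ys1, m))"

lemma nodeOf_LA: "m1 < nM \<Longrightarrow> (fst (nodeOf j mem m), stB j' ys m' m1, m1) \<in> LA"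
proof (cases mem)
  case None
  assume "m1 < nM"
  then show ?thesis using None unfolding nodeOf_def SA0_def stB_def by (simp add: st_in_LA)
next
  case (Some Y)
  assume "m1 < nM"
  then show ?thesis using Some unfolding nodeOf_def stA_def stB_def
    by (cases Y) (auto simp: st_in_LA)
qed

definition okB :: "nat \<Rightarrow> nat list \<Rightarrow> nat list \<Rightarrow> nat \<Rightarrow> nat \<Rightarrow> bool" where
  "okB j xs ys m m1 \<longleftrightarrow> stB j ys m m1 \<noteq> [] \<and>
     (\<forall>m2<nM. stA j xs m1 m2 \<noteq> [] \<longrightarrow> \<not> wA (n - j) (stA j xs m1 m2, stB j ys m m1, m2))"

definition gBn :: "nat \<Rightarrow> nat \<Rightarrow> node \<Rightarrow> nat \<Rightarrow> nat" where
  "gBn j m Y x = (case Y of (xs, ys, mm) \<Rightarrow>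
     if (\<exists>m1<nM. okB j xs ys m m1)
     then (let m1 = (LEAST m1. m1 < nM \<and> okB j xs ys m m1) in m1 * nRB + to_nat (Some (xs, stB j ys m m1, m1)))
     else x)"

definition gB :: "nat \<Rightarrow> nat \<Rightarrow> nat" where
  "gB j x = gBn j (x div nRB) (nodeOf j (from_nat (x mod nRB)) (x div nRB)) x"

lemma codeB_mid: "m1 < nM \<Longrightarrow> to_nat (Some (fst (nodeOf j mem m), stB j' ys m' m1, m1)) < nRB"
proof -
  assume "m1 < nM"
  then have "(fst (nodeOf j mem m), stB j' ys m' m1, m1) \<in> LA" by (rule nodeOf_LA)
  then have "Some (fst (nodeOf j mem m), stB j' ys m' m1, m1) \<in> LB" unfolding LB_def by simp
  then show ?thesis by (rule codeB_lt)
qed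

lemma gB_bound: "x < nM*nRB \<Longrightarrow> gB j x < nM*nRB"
proof -
  assume x: "x < nM*nRB"
  obtain xs ys mm where Y: "nodeOf j (from_nat (x mod nRB)) (x div nRB) = (xs, ys, mm)"
    by (metis prod.exhaust)
  show ?thesis
  proof (cases "\<exists>m1<nM. okB j xs ys (x div nRB) m1")
    case True
    define m1 where "m1 = (LEAST m1. m1 < nM \<and> okB j xs ys (x div nRB) m1)"
    have m1: "m1 < nM \<and> okB j xs ys (x div nRB) m1" unfolding m1_def by (rule LeastI_ex) (use True in blast)
    have fx: "fst (nodeOf j (from_nat (x mod nRB)) (x div nRB)) = xs" using Y by simp
    have "to_nat (Some (xs, stB j ys (x div nRB) m1, m1)) < nRB"
      using codeB_mid[of m1 j "from_nat (x mod nRB)" "x div nRB" j ys "x div nRB"] m1 unfolding fx by blast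
    then have "m1 * nRB + to_nat (Some (xs, stB j ys (x div nRB) m1, m1)) < nM * nRB"
      using m1 idx_lt by blast
    moreover have "gB j x = m1 * nRB + to_nat (Some (xs, stB j ys (x div nRB) m1, m1))"
      unfolding gB_def Y gBn_def using True by (simp add: m1_def Let_def)
    ultimately show ?thesis by simp
  next
    case False
    have "gB j x = x" unfolding gB_def Y gBn_def prod.case if_not_P[OF False] ..
    then show ?thesis using x by simp
  qed
qed

lemma gB_spec:
  assumes r: "r < nRB" and Y: "nodeOf j (from_nat r) m = (xs, ys, mm)" and ex: "\<exists>m1<nM. okB j xs ys m m1"
  shows "\<exists>m1<nM. okB j xs ys m m1 \<and> gB j (m*nRB + r) = m1 * nRB + to_nat (Some (xs, stB j ys m m1, m1))"
proof -
  define m1 where "m1 = (LEAST m1. m1 < nM \<and> okB j xs ys m m1)"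
  have m1: "m1 < nM \<and> okB j xs ys m m1" unfolding m1_def by (rule LeastI_ex) (use ex in blast)
  have d: "(m*nRB + r) div nRB = m" "(m*nRB + r) mod nRB = r" using r by (simp_all add: add.commute[of "_ * _"])
  have g: "gB j (m*nRB + r) = gBn j m (xs, ys, mm) (m*nRB + r)" by (simp only: gB_def d Y)
  have "gBn j m (xs, ys, mm) (m*nRB + r) = m1 * nRB + to_nat (Some (xs, stB j ys m m1, m1))"
    using ex unfolding gBn_def m1_def by (simp add: Let_def)
  then have "gB j (m*nRB + r) = m1 * nRB + to_nat (Some (xs, stB j ys m m1, m1))" using g by simp
  then show ?thesis using m1 by (intro exI[of _ m1]) simp
qed

end

context honest
begin

lemma bob_cheat:
  assumes lose: "\<forall>m0<nM. SA0 m0 \<noteq> [] \<longrightarrow> \<not> wA n (SA0 m0, SB0, m0)"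
  shows "\<exists>nR \<sigma>'. 1 \<le> nR \<and> stratB N (classical_alg nR) (classical_alg nM) \<sigma>' \<and>
           prob N (classical_alg nA) (classical_alg nM) (classical_alg nR) \<sigma>A \<sigma>' Out1 Out1 = 1"
proof -
  define c0 where "c0 = to_nat (None :: node option)"
  define \<sigma>D where "\<sigma>D = cheat nRB c0 (nM*nRB) gB nRB Out1"
  have c0: "c0 < nRB" unfolding c0_def by (rule codeB_lt) (simp add: LB_def)
  have sD: "stratB N (classical_alg nRB) (classical_alg nM) \<sigma>D"
    unfolding \<sigma>D_def by (rule cheatB_strat[OF c0 gB_bound])
  let ?Q = "evp nA nM nRB \<sigma>A \<sigma>D"
  have inv: "\<forall>a<nA. \<forall>m<nM. \<forall>r<nRB. 0 < ?Q k a m r \<longrightarrow>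
      (\<exists>xs ys. nodeOf (Suc k) (from_nat r) m = (xs, ys, m) \<and> a \<in> set xs \<and> good k (xs, ys, m) \<and> \<not> wA (n - k) (xs, ys, m))"
    if "k \<le> n" for k
    using that
  proof (induction k)
    case 0
    show ?case
    proof (intro allI impI)
      fix a m r assume a: "a < nA" and m: "m < nM" and r: "r < nRB" and pos: "0 < ?Q 0 a m r"
      have am: "a*nM + m < nA*nM" using idx_lt[OF a m] .
      have stA: "is_state [(1,nA),(1,nM)] (st_init \<sigma>A)" using sA by (simp add: stratA_def classical_alg_def)
      have pa: "0 \<le> alpha \<sigma>A (a*nM+m)"
        using state_props(2)[OF stA claz_simps(2)] am by (simp add: alpha_def)
      have ar: "alpha \<sigma>D r = (if r = c0 then 1 else 0)" unfolding \<sigma>D_def using r by (rule cheat_alpha)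
      have "0 < alpha \<sigma>A (a*nM+m) * alpha \<sigma>D r" using pos by simp
      then have "r = c0" and apos: "0 < alpha \<sigma>A (a*nM+m)" using ar pa by (auto split: if_splits)
      then have fr: "from_nat r = (None :: node option)" by (simp add: c0_def)
      have aS: "a \<in> set (SA0 m)" using apos a by (simp add: SA0_def)
      then have "SA0 m \<noteq> []" by auto
      then have "\<not> wA n (SA0 m, SB0, m)" using lose m by blast
      then show "\<exists>xs ys. nodeOf (Suc 0) (from_nat r) m = (xs, ys, m) \<and> a \<in> set xs \<and> good 0 (xs, ys, m) \<and> \<not> wA (n - 0) (xs, ys, m)"
        using fr aS good0[OF m] by (simp add: nodeOf_def)
    qed
  next
    case (Suc k)
    have k: "k < n" using Suc.prems by simp
    have j: "Suc k \<in> {1..n}" using k by simp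
    have IH: "\<forall>a<nA. \<forall>m<nM. \<forall>r<nRB. 0 < ?Q k a m r \<longrightarrow>
      (\<exists>xs ys. nodeOf (Suc k) (from_nat r) m = (xs, ys, m) \<and> a \<in> set xs \<and> good k (xs, ys, m) \<and> \<not> wA (n - k) (xs, ys, m))"
      using Suc by simp
    have kD: "kpos (nM*nRB) (kern (st_ops \<sigma>D (Suc k)))" by (rule strat_kpos_B[OF sD j])
    have kA: "kpos (nA*nM) (KA (Suc k))" by (rule strat_kpos_A[OF sA j])
    have pQ: "ppos nA nM nRB (?Q k)" using evp_props[OF sA sD, of k] k by simp
    have pM: "ppos nA nM nRB (bstep nM nRB (kern (st_ops \<sigma>D (Suc k))) (?Q k))" by (rule bstep_ppos[OF kD pQ])
    show ?case
    proof (intro allI impI)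
      fix a' m2 r' assume a': "a' < nA" and m2: "m2 < nM" and r': "r' < nRB" and pos: "0 < ?Q (Suc k) a' m2 r'"
      have "0 < astep nA nM (KA (Suc k)) (bstep nM nRB (kern (st_ops \<sigma>D (Suc k))) (?Q k)) a' m2 r'"
        using pos by simp
      then obtain a m1 where a: "a < nA" and m1: "m1 < nM"
        and pmid: "0 < bstep nM nRB (kern (st_ops \<sigma>D (Suc k))) (?Q k) a m1 r'"
        and ka: "0 < KA (Suc k) (a*nM+m1) (a'*nM+m2)"
        using astep_pos_iff[OF kA pM a' m2 r'] by blast
      obtain m r where m: "m < nM" and r: "r < nRB" and pq: "0 < ?Q k a m r"
        and kd: "0 < kern (st_ops \<sigma>D (Suc k)) (m*nRB+r) (m1*nRB+r')"
        using pmid bstep_pos_iff[OF kD pQ a m1 r'] by blast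
      obtain xs ys where X: "nodeOf (Suc k) (from_nat r) m = (xs, ys, m)" and axs: "a \<in> set xs"
        and g: "good k (xs, ys, m)" and w: "\<not> wA (n - k) (xs, ys, m)"
        using IH a m r pq by blast
      have ex: "\<exists>m1<nM. okB (Suc k) xs ys m m1"
        using w wA_step[OF k] unfolding okB_def by blast
      obtain m1' where m1': "m1' < nM" and ok: "okB (Suc k) xs ys m m1'"
        and gv: "gB (Suc k) (m*nRB + r) = m1' * nRB + to_nat (Some (xs, stB (Suc k) ys m m1', m1'))"
        using gB_spec[OF r X ex] by blast
      have "kern (st_ops \<sigma>D (Suc k)) (m*nRB+r) (m1*nRB+r') = detK (gB (Suc k)) (m*nRB+r) (m1*nRB+r')"
        unfolding \<sigma>D_def by (rule cheat_kern) (use idx_lt m r m1 r' in auto)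
      then have "m1*nRB + r' = gB (Suc k) (m*nRB + r)" using kd by (auto simp: detK_def split: if_splits)
      moreover have "to_nat (Some (xs, stB (Suc k) ys m m1', m1')) < nRB"
        using codeB_mid[OF m1', of "Suc k" "from_nat r" m "Suc k" ys m] X by simp
      ultimately have "m1 = m1' \<and> r' = to_nat (Some (xs, stB (Suc k) ys m m1', m1'))"
        using gv divmod_uniq[of m1 nRB r' m1'] r' by metis
      then have fr: "from_nat r' = Some (xs, stB (Suc k) ys m m1, m1)" and m1e: "m1 = m1'" by auto
      have nd: "nodeOf (Suc (Suc k)) (from_nat r') m2 = (stA (Suc k) xs m1 m2, stB (Suc k) ys m m1, m2)"
        by (simp add: fr nodeOf_def)
      have a'S: "a' \<in> set (stA (Suc k) xs m1 m2)" using axs ka a' by (auto simp: stA_def)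
      then have "stA (Suc k) xs m1 m2 \<noteq> []" by auto
      then have "\<not> wA (n - Suc k) (stA (Suc k) xs m1 m2, stB (Suc k) ys m m1, m2)"
        using ok m2 m1e unfolding okB_def by blast
      then show "\<exists>xs ys. nodeOf (Suc (Suc k)) (from_nat r') m2 = (xs, ys, m2) \<and> a' \<in> set xs \<and>
          good (Suc k) (xs, ys, m2) \<and> \<not> wA (n - Suc k) (xs, ys, m2)"
        using nd a'S good_step[OF g k m1 m2] by blast
    qed
  qed
  have "prob N (classical_alg nA) (classical_alg nM) (classical_alg nRB) \<sigma>A \<sigma>D Out1 Out1 = 1"
    unfolding prob_eq[OF sA sD]
  proof (rule mass_weighted_one)
    show "ppos nA nM nRB (?Q n)" "mass nA nM nRB (?Q n) = 1" using evp_props[OF sA sD, of n] by auto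
    fix a m r assume a: "a < nA" and m: "m < nM" and r: "r < nRB" and pos: "0 < ?Q n a m r"
    obtain xs ys where "a \<in> set xs" "good n (xs, ys, m)" "\<not> wA (n - n) (xs, ys, m)"
      using inv[of n] a m r pos by blast
    then have "emeas \<sigma>A Out1 a = 1" using leaf_B by simp
    moreover have "emeas \<sigma>D Out1 r = 1" unfolding \<sigma>D_def using r by (rule cheat_emeas)
    ultimately show "emeas \<sigma>A Out1 a * emeas \<sigma>D Out1 r = 1" by simp
  qed
  then show ?thesis using sD by (intro exI[of _ nRB] exI[of _ \<sigma>D]) (simp add: nRB_def)
qed

lemma some_cheat:
  "(\<exists>nR \<sigma>'. 1 \<le> nR \<and> stratA N (classical_alg nR) (classical_alg nM) \<sigma>' \<and>
           prob N (classical_alg nR) (classical_alg nM) (classical_alg nB) \<sigma>' \<sigma>B Out0 Out0 = 1)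
 \<or> (\<exists>nR \<sigma>'. 1 \<le> nR \<and> stratB N (classical_alg nR) (classical_alg nM) \<sigma>' \<and>
           prob N (classical_alg nA) (classical_alg nM) (classical_alg nR) \<sigma>A \<sigma>' Out1 Out1 = 1)"
proof (cases "\<exists>m0<nM. SA0 m0 \<noteq> [] \<and> wA n (SA0 m0, SB0, m0)")
  case True
  then show ?thesis using alice_cheat by blast
next
  case False
  then show ?thesis using bob_cheat by blast
qed

end

lemma weak_impossible:
  assumes eps: "\<epsilon> < 1/2"
  shows "\<not> weak_coin_tossing N (classical_alg nA) (classical_alg nM) (classical_alg nB) \<epsilon> \<sigma>A \<sigma>B"
proof
  assume w: "weak_coin_tossing N (classical_alg nA) (classical_alg nM) (classical_alg nB) \<epsilon> \<sigma>A \<sigma>B"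
  then have h: "honest N nA nM nB \<sigma>A \<sigma>B"
    unfolding weak_coin_tossing_def honest_def by blast
  have cA: "\<And>r \<sigma>'. obs_alg r \<Longrightarrow> stratA N r (classical_alg nM) \<sigma>' \<Longrightarrow>
      prob N r (classical_alg nM) (classical_alg nB) \<sigma>' \<sigma>B Out0 Out0 \<le> 1/2 + \<epsilon>"
    using w unfolding weak_coin_tossing_def by blast
  have cB: "\<And>r \<sigma>'. obs_alg r \<Longrightarrow> stratB N r (classical_alg nM) \<sigma>' \<Longrightarrow>
      prob N (classical_alg nA) (classical_alg nM) r \<sigma>A \<sigma>' Out1 Out1 \<le> 1/2 + \<epsilon>"
    using w unfolding weak_coin_tossing_def by blast
  have oa: "1 \<le> nR \<Longrightarrow> obs_alg (classical_alg nR)" for nR by (simp add: obs_alg_def classical_alg_def)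
  from honest.some_cheat[OF h] show False
  proof
    assume "\<exists>nR \<sigma>'. 1 \<le> nR \<and> stratA N (classical_alg nR) (classical_alg nM) \<sigma>' \<and>
           prob N (classical_alg nR) (classical_alg nM) (classical_alg nB) \<sigma>' \<sigma>B Out0 Out0 = 1"
    then obtain nR \<sigma>' where "1 \<le> nR" "stratA N (classical_alg nR) (classical_alg nM) \<sigma>'"
      "prob N (classical_alg nR) (classical_alg nM) (classical_alg nB) \<sigma>' \<sigma>B Out0 Out0 = 1" by blast
    then show False using cA[OF oa] eps by fastforce
  next
    assume "\<exists>nR \<sigma>'. 1 \<le> nR \<and> stratB N (classical_alg nR) (classical_alg nM) \<sigma>' \<and>
           prob N (classical_alg nA) (classical_alg nM) (classical_alg nR) \<sigma>A \<sigma>' Out1 Out1 = 1"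
    then obtain nR \<sigma>' where "1 \<le> nR" "stratB N (classical_alg nR) (classical_alg nM) \<sigma>'"
      "prob N (classical_alg nA) (classical_alg nM) (classical_alg nR) \<sigma>A \<sigma>' Out1 Out1 = 1" by blast
    then show False using cB[OF oa] eps by fastforce
  qed
qed

lemma strong_weak:
  "strong_coin_tossing N a m b \<epsilon> \<sigma>A \<sigma>B \<Longrightarrow> weak_coin_tossing N a m b \<epsilon> \<sigma>A \<sigma>B"
  unfolding strong_coin_tossing_def weak_coin_tossing_def by blast

theorem mainTheorem1:
  fixes N nA nB nM :: nat and \<epsilon> :: real
  assumes "even N" and "\<epsilon> < 1/2"
  shows "\<not> (\<exists>\<sigma>A \<sigma>B. weak_coin_tossing N (classical_alg nA) (classical_alg nM) (classical_alg nB) \<epsilon> \<sigma>A \<sigma>B)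
       \<and> \<not> (\<exists>\<sigma>A \<sigma>B. strong_coin_tossing N (classical_alg nA) (classical_alg nM) (classical_alg nB) \<epsilon> \<sigma>A \<sigma>B)"
  using weak_impossible[OF assms(2)] strong_weak by blast

end
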